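(* Let $(\Omega,\mathcal F,\mu)$ be a measure space, $p\in(1,\infty)$ and $r=\min\{p,2\}$. There is a constant $C>0$ depending only on $(\Omega,\mathcal F,\mu)$ and $p$ such that the following holds. If $\mathscr A\subset L^p(\Omega,\mathcal F,\mu)$ is uniformly approximable, then for every $K\ge0$ the set $\mathscr A_K=\{f\in\overline{\mathrm{co}}(\mathscr A):\ \|f-g\|_p\le K\ \text{for all } g\in\mathscr A\}$ is uniformly approximable, and for every $\varepsilon>0$, $$N_{p,\varepsilon}(\mathscr A_K)\le\min_{\eta\in(0,1)}\big(N_{p,(1-\eta)\varepsilon}(\mathscr A)\big)^{s(\eta)},\qquad s(\eta)=\Big\lfloor\Big(\tfrac{CK}{\eta\varepsilon}\Big)^{\frac{r}{r-1}}\Big\rfloor+1.$$ In particular, if $\mathscr A$ is bounded and uniformly approximable, then its closed convex hull $\overline{\mathrm{co}}(\mathscr A)$ is uniformly approximable.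
   Context: All measures are assumed not identically zero. $\mathscr G_{p,k}$ is the set of functions $\sum_{i=1}^l a_i\mathbf 1_{A_i}\in L^p$ with $l\le k$, $\{A_i\}$ a measurable partition of $\Omega$, $a_i\in\mathbb R$. $N_{p,\varepsilon}(\mathscr A)=\inf\{k\ge1:\ \forall f\in\mathscr A\ \exists h\in\mathscr G_{p,k},\ \|f-h\|_p\le\varepsilon\}$ ($\inf\emptyset=\infty$); $\mathscr A$ is uniformly approximable if this is finite for all $\varepsilon>0$. $\overline{\mathrm{co}}$ denotes the norm-closed convex hull. *)

theory Defs
  imports "HOL-Analysis.Analysis" "HOL-Library.Extended_Nat"
begin

definition Lp :: "'a measure \<Rightarrow> real \<Rightarrow> ('a \<Rightarrow> real) set" where
  "Lp M p = {f. f \<in> borel_measurable M \<and> integrable M (\<lambda>x. \<bar>f x\<bar> powr p)}"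

definition Lpnorm :: "'a measure \<Rightarrow> real \<Rightarrow> ('a \<Rightarrow> real) \<Rightarrow> real" where
  "Lpnorm M p f = (\<integral>x. \<bar>f x\<bar> powr p \<partial>M) powr (1 / p)"

definition Gpk :: "'a measure \<Rightarrow> real \<Rightarrow> nat \<Rightarrow> ('a \<Rightarrow> real) set" where
  "Gpk M p k = {h. h \<in> Lp M p \<and>
     (\<exists>l::nat. \<exists>A :: nat \<Rightarrow> 'a set. \<exists>a :: nat \<Rightarrow> real.
        l \<le> k \<and> (\<forall>i<l. A i \<in> sets M) \<and>
        (\<forall>i<l. \<forall>j<l. i \<noteq> j \<longrightarrow> A i \<inter> A j = {}) \<and>
        (\<Union>i<l. A i) = space M \<and>
        h = (\<lambda>x. \<Sum>i<l. a i * indicator (A i) x))}"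

definition Ncov :: "'a measure \<Rightarrow> real \<Rightarrow> real \<Rightarrow> ('a \<Rightarrow> real) set \<Rightarrow> enat" where
  "Ncov M p \<epsilon> \<A> = (INF k \<in> {k::nat. k \<ge> 1 \<and>
      (\<forall>f\<in>\<A>. \<exists>h\<in>Gpk M p k. Lpnorm M p (\<lambda>x. f x - h x) \<le> \<epsilon>)}. enat k)"

definition unif_approx :: "'a measure \<Rightarrow> real \<Rightarrow> ('a \<Rightarrow> real) set \<Rightarrow> bool" where
  "unif_approx M p \<A> \<longleftrightarrow> (\<forall>\<epsilon>>0. Ncov M p \<epsilon> \<A> < \<infinity>)"

definition conv_comb :: "('a \<Rightarrow> real) set \<Rightarrow> ('a \<Rightarrow> real) set" where
  "conv_comb \<A> = {f. \<exists>n::nat. \<exists>c :: nat \<Rightarrow> real. \<exists>g :: nat \<Rightarrow> 'a \<Rightarrow> real.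
      (\<forall>i<n. c i \<ge> 0 \<and> g i \<in> \<A>) \<and> (\<Sum>i<n. c i) = 1 \<and>
      f = (\<lambda>x. \<Sum>i<n. c i * g i x)}"

definition closed_co :: "'a measure \<Rightarrow> real \<Rightarrow> ('a \<Rightarrow> real) set \<Rightarrow> ('a \<Rightarrow> real) set" where
  "closed_co M p \<A> = {f \<in> Lp M p. \<forall>\<delta>>0. \<exists>g\<in>conv_comb \<A>. Lpnorm M p (\<lambda>x. f x - g x) \<le> \<delta>}"

end

theory Submission
  imports Defs
begin


lemma taylor_powr2:
  fixes p a b :: real
  assumes a: "a > 0" and b: "2 * \<bar>b\<bar> < a"
  shows "\<exists>\<xi>. a/2 < \<xi> \<and> \<xi> < 3*a/2 \<and>
     (a+b) powr p = a powr p + p * a powr (p-1) * b + p*(p-1)/2 * \<xi> powr (p-2) * b^2"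
proof (cases "b = 0")
  case True
  then show ?thesis using a by (intro exI[of _ a]) auto
next
  case False
  define diff where "diff = (\<lambda>m::nat. \<lambda>t::real. if m = 0 then t powr p else if m = 1 then p * t powr (p-1)
      else p*(p-1) * t powr (p-2))"
  have D: "\<forall>(m::nat) t. m < 2 \<and> a/2 \<le> t \<and> t \<le> 3*a/2 \<longrightarrow> DERIV (diff m) t :> diff (Suc m) t"
  proof (intro allI impI)
    fix m :: nat and t assume h: "m < 2 \<and> a/2 \<le> t \<and> t \<le> 3*a/2"
    then have t: "t > 0" using a by auto
    show "DERIV (diff m) t :> diff (Suc m) t"
    proof (cases "m = 0")
      case True
      then show ?thesis unfolding diff_def using has_real_derivative_powr[OF t, of p] by simp
    next
      case False
      then have "m = 1" using h by auto
      have "((\<lambda>t. p * t powr (p-1)) has_real_derivative p * ((p-1) * t powr (p-1-1))) (at t)"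
        by (intro DERIV_cmult has_real_derivative_powr t)
      then show ?thesis unfolding diff_def using \<open>m = 1\<close> by (simp add: algebra_simps)
    qed
  qed
  have "\<exists>t. (if a+b < a then a+b < t \<and> t < a else a < t \<and> t < a+b) \<and>
    (\<lambda>t. t powr p) (a+b) = (\<Sum>m<2. (diff m a / fact m) * ((a+b) - a)^m) + (diff 2 t / fact 2) * ((a+b) - a)^2"
    by (rule Taylor[OF _ _ D]) (use a b False in \<open>auto simp: diff_def\<close>)
  then obtain t where t: "(if a+b < a then a+b < t \<and> t < a else a < t \<and> t < a+b)"
    and eq: "(a+b) powr p = (\<Sum>m<2. (diff m a / fact m) * ((a+b) - a)^m) + (diff 2 t / fact 2) * ((a+b) - a)^2"
    by auto
  have "a/2 < t \<and> t < 3*a/2" using t a b by (auto split: if_splits)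
  moreover have "(a+b) powr p = a powr p + p * a powr (p-1) * b + p*(p-1)/2 * t powr (p-2) * b^2"
    using eq by (simp add: diff_def eval_nat_numeral)
  ultimately show ?thesis by blast
qed


lemma scal_case1:
  fixes p a b E \<kappa> q :: real
  assumes p: "1 < p" and ab: "\<bar>a\<bar> \<le> 2 * \<bar>b\<bar>" and k: "\<kappa> \<ge> 1" and q: "q \<ge> 1"
    and E: "E \<ge> 3 powr p + p * 2 powr (p-1)"
  shows "\<bar>a+b\<bar> powr p \<le> (1 + 1/(2*\<kappa>)) * \<bar>a\<bar> powr p + p * sgn a * \<bar>a\<bar> powr (p-1) * b + E * \<kappa> powr (q-1) * \<bar>b\<bar> powr p"
proof (cases "b = 0")
  case True
  then show ?thesis using ab by simp
next
  case False
  then have bpos: "\<bar>b\<bar> > 0" by simp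
  have "\<bar>a+b\<bar> powr p \<le> (3*\<bar>b\<bar>) powr p"
    by (rule powr_mono2) (use p ab in auto)
  also have "\<dots> = 3 powr p * \<bar>b\<bar> powr p" by (simp add: powr_mult)
  finally have l: "\<bar>a+b\<bar> powr p \<le> 3 powr p * \<bar>b\<bar> powr p" .
  have "\<bar>p * sgn a * \<bar>a\<bar> powr (p-1) * b\<bar> \<le> p * \<bar>a\<bar> powr (p-1) * \<bar>b\<bar>"
    using p by (auto simp: abs_mult abs_sgn_eq)
  also have "\<dots> \<le> p * (2*\<bar>b\<bar>) powr (p-1) * \<bar>b\<bar>"
    using p ab by (intro mult_right_mono mult_left_mono powr_mono2) auto
  also have "\<dots> = p * 2 powr (p-1) * \<bar>b\<bar> powr p"
    using bpos by (simp add: powr_mult powr_diff)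
  finally have lin: "p * sgn a * \<bar>a\<bar> powr (p-1) * b \<ge> - (p * 2 powr (p-1) * \<bar>b\<bar> powr p)"
    by linarith
  have k1: "\<kappa> powr (q-1) \<ge> 1" using k q by (intro ge_one_powr_ge_zero) auto
  have "E * \<bar>b\<bar> powr p \<le> E * \<kappa> powr (q-1) * \<bar>b\<bar> powr p"
  proof -
    have "E \<ge> 0" using E by (smt (verit) powr_ge_zero p mult_nonneg_nonneg)
    then have "E * 1 \<le> E * \<kappa> powr (q-1)" using k1 by (intro mult_left_mono) auto
    then show ?thesis by (intro mult_right_mono) auto
  qed
  moreover have "(1 + 1/(2*\<kappa>)) * \<bar>a\<bar> powr p \<ge> 0" using k by simp
  moreover have "3 powr p * \<bar>b\<bar> powr p + p * 2 powr (p-1) * \<bar>b\<bar> powr p \<le> E * \<bar>b\<bar> powr p"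
    using E by (metis distrib_right mult_right_mono powr_ge_zero)
  ultimately show ?thesis using l lin by linarith
qed


lemma scal_case2_pos:
  fixes p a b E \<kappa> G :: real
  assumes p: "1 < p" and a: "a > 0" and ab: "2 * \<bar>b\<bar> < a" and k: "\<kappa> \<ge> 1"
    and G: "G = p*(p-1)/2 * 2 powr (p-2)"
    and E: "E \<ge> p*(p-1)/2 + G * (2*G) powr (p/2-1)"
  shows "\<bar>a+b\<bar> powr p \<le> (1 + 1/(2*\<kappa>)) * a powr p + p * a powr (p-1) * b
            + E * \<kappa> powr (p / min p 2 - 1) * \<bar>b\<bar> powr p"
proof -
  obtain \<xi> where xi: "a/2 < \<xi>" "\<xi> < 3*a/2"
    and tay: "(a+b) powr p = a powr p + p * a powr (p-1) * b + p*(p-1)/2 * \<xi> powr (p-2) * b^2"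
    using taylor_powr2[OF a ab] by blast
  have apb: "\<bar>a+b\<bar> = a+b" using a ab by auto
  have G0: "G \<ge> 0" unfolding G using p by (simp add: zero_le_mult_iff)
  have E1: "E \<ge> p*(p-1)/2" using E G0 by (smt (verit) mult_nonneg_nonneg powr_ge_zero)
  have "p*(p-1)/2 \<ge> 0" using p by simp
  then have E2: "E \<ge> G * (2*G) powr (p/2-1)" using E by linarith
  define R where "R = p*(p-1)/2 * \<xi> powr (p-2) * b^2"
  have main: "R \<le> a powr p / (2*\<kappa>) + E * \<kappa> powr (p / min p 2 - 1) * \<bar>b\<bar> powr p"
  proof (cases "b = 0")
    case True
    then show ?thesis using k unfolding R_def by simp
  next
    case False
    then have bpos: "\<bar>b\<bar> > 0" by simp
    have b2: "b^2 = \<bar>b\<bar> powr 2" using bpos by (simp add: powr_realpow)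
    have pp: "p*(p-1)/2 \<ge> 0" using p by simp
    have kq0: "\<kappa> powr (p / min p 2 - 1) \<ge> 1" using k p by (intro ge_one_powr_ge_zero) auto
    show ?thesis
    proof (cases "p \<le> 2")
      case True
      have x1: "\<xi> powr (p-2) \<le> (a/2) powr (p-2)"
        using xi True a by (intro powr_mono2') auto
      have x2: "\<bar>b\<bar> powr (2-p) \<le> (a/2) powr (2-p)"
        using True ab by (intro powr_mono2) auto
      have x3: "(a/2) powr (p-2) * (a/2) powr (2-p) = 1"
        using a by (subst powr_add[symmetric]) simp
      have "\<bar>b\<bar> powr (2-p) * \<bar>b\<bar> powr p = \<bar>b\<bar> powr 2"
        by (subst powr_add[symmetric]) simp
      then have "\<xi> powr (p-2) * b^2 = \<xi> powr (p-2) * \<bar>b\<bar> powr (2-p) * \<bar>b\<bar> powr p"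
        by (metis b2 mult.assoc)
      also have "\<dots> \<le> (a/2) powr (p-2) * (a/2) powr (2-p) * \<bar>b\<bar> powr p"
        using x1 x2 by (intro mult_right_mono mult_mono) auto
      finally have "\<xi> powr (p-2) * b^2 \<le> \<bar>b\<bar> powr p" using x3 by simp
      then have "R \<le> p*(p-1)/2 * \<bar>b\<bar> powr p" unfolding R_def using pp
        by (metis mult.assoc mult_left_mono)
      also have "\<dots> \<le> E * \<bar>b\<bar> powr p" using E1 by (intro mult_right_mono) auto
      also have "\<dots> \<le> E * \<kappa> powr (p / min p 2 - 1) * \<bar>b\<bar> powr p"
        using kq0 E1 pp by (intro mult_right_mono) (auto intro: order_trans[OF _ mult_left_mono[of 1]])
      finally show ?thesis using k a by (smt (verit) divide_nonneg_pos powr_ge_zero)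
    next
      case False
      then have q: "p / min p 2 - 1 = p/2 - 1" by simp
      have x1: "\<xi> powr (p-2) \<le> (2*a) powr (p-2)"
        using xi False a by (intro powr_mono2) auto
      have "R \<le> p*(p-1)/2 * (2*a) powr (p-2) * b^2"
        unfolding R_def using x1 pp by (intro mult_right_mono mult_left_mono) auto
      also have "\<dots> = G * (a powr (p-2) * b^2)" unfolding G using a by (simp add: powr_mult)
      finally have R1: "R \<le> G * (a powr (p-2) * b^2)" .
      have a2: "a^2 = a powr 2" using a by (simp add: powr_realpow)
      have "a powr (p-2) * a powr 2 = a powr p" by (subst powr_add[symmetric]) simp
      then have ap: "a powr p = a powr (p-2) * a^2" unfolding a2 by (rule sym)
      show ?thesis
      proof (cases "G * b^2 * (2*\<kappa>) \<le> a^2")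
        case True
        have "G * (a powr (p-2) * b^2) = a powr (p-2) * (G * b^2 * (2*\<kappa>)) / (2*\<kappa>)"
          using k by simp
        also have "\<dots> \<le> a powr (p-2) * a^2 / (2*\<kappa>)"
          using True k by (intro divide_right_mono mult_left_mono) auto
        finally have "R \<le> a powr p / (2*\<kappa>)" using R1 ap by simp
        moreover have "E * \<kappa> powr (p / min p 2 - 1) * \<bar>b\<bar> powr p \<ge> 0"
          using E1 pp by simp
        ultimately show ?thesis by linarith
      next
        case False2: False
        have eqq: "(G * b^2 * (2*\<kappa>)) powr ((p-2)/2) = (2*G) powr (p/2-1) * \<kappa> powr (p/2-1) * \<bar>b\<bar> powr (p-2)"
        proof -
          have "(G * b^2 * (2*\<kappa>)) powr ((p-2)/2) = ((2*G) * \<kappa> * \<bar>b\<bar> powr 2) powr ((p-2)/2)"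
            by (simp add: ac_simps)
          also have "\<dots> = (2*G) powr ((p-2)/2) * \<kappa> powr ((p-2)/2) * (\<bar>b\<bar> powr 2) powr ((p-2)/2)"
            using G0 k by (simp only: powr_mult abs_ge_zero powr_ge_zero mult_nonneg_nonneg)
          also have "(\<bar>b\<bar> powr 2) powr ((p-2)/2) = \<bar>b\<bar> powr (p-2)"
          proof -
            have "2 * ((p-2)/2) = p - 2" by simp
            then show ?thesis by (simp only: powr_powr)
          qed
          finally have X: "(G * b^2 * (2*\<kappa>)) powr ((p-2)/2) = (2*G) powr ((p-2)/2) * \<kappa> powr ((p-2)/2) * \<bar>b\<bar> powr (p-2)" .
          have hq: "(p-2)/2 = p/2 - 1" by (simp add: field_simps)
          show ?thesis unfolding hq[symmetric] by (rule X)
        qed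
        have "a powr (p-2) = (a^2) powr ((p-2)/2)"
        proof -
          have h: "2*((p-2)/2) = p-2" by simp
          show ?thesis by (simp only: a2 powr_powr h)
        qed
        also have "\<dots> \<le> (G * b^2 * (2*\<kappa>)) powr ((p-2)/2)"
          using False2 False by (intro powr_mono2) auto
        also note eqq
        finally have "a powr (p-2) \<le> (2*G) powr (p/2-1) * \<kappa> powr (p/2-1) * \<bar>b\<bar> powr (p-2)" .
        then have "G * (a powr (p-2) * b^2) \<le> G * ((2*G) powr (p/2-1) * \<kappa> powr (p/2-1) * \<bar>b\<bar> powr (p-2) * b^2)"
          using G0 by (intro mult_left_mono mult_right_mono) auto
        also have "\<dots> = G * (2*G) powr (p/2-1) * \<kappa> powr (p/2-1) * \<bar>b\<bar> powr p"
        proof -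
          have "\<bar>b\<bar> powr (p-2) * \<bar>b\<bar> powr 2 = \<bar>b\<bar> powr p"
            by (subst powr_add[symmetric]) simp
          then show ?thesis by (metis b2 mult.assoc)
        qed
        also have "\<dots> \<le> E * \<kappa> powr (p/2-1) * \<bar>b\<bar> powr p"
          using E2 by (intro mult_right_mono) auto
        finally show ?thesis using R1 q k a by (smt (verit) divide_nonneg_pos powr_ge_zero)
      qed
    qed
  qed
  show ?thesis using tay main apb unfolding R_def by (simp add: algebra_simps)
qed


lemma scalar_ineq:
  fixes p :: real
  assumes p: "1 < p"
  shows "\<exists>E>0. \<forall>\<kappa> a b. \<kappa> \<ge> 1 \<longrightarrow> \<bar>a+b\<bar> powr p \<le> (1 + 1/(2*\<kappa>)) * \<bar>a\<bar> powr p
      + p * sgn a * \<bar>a\<bar> powr (p-1) * b + E * \<kappa> powr (p / min p 2 - 1) * \<bar>b\<bar> powr p"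
proof -
  define G where "G = p*(p-1)/2 * 2 powr (p-2)"
  have G0: "G \<ge> 0" unfolding G_def using p by (simp add: zero_le_mult_iff)
  define E where "E = 3 powr p + p * 2 powr (p-1) + (p*(p-1)/2 + G * (2*G) powr (p/2-1))"
  have t1: "p * 2 powr (p-1) \<ge> 0" "p*(p-1)/2 \<ge> 0" "G * (2*G) powr (p/2-1) \<ge> 0"
    using p G0 by auto
  have Epos: "E > 0" unfolding E_def using t1 by (smt (verit) powr_gt_zero)
  have Ea: "E \<ge> 3 powr p + p * 2 powr (p-1)" unfolding E_def using t1 by linarith
  have Eb: "E \<ge> p*(p-1)/2 + G * (2*G) powr (p/2-1)" unfolding E_def using t1
    by (smt (verit) powr_gt_zero)
  have q1: "p / min p 2 \<ge> 1" using p by (auto simp: min_def)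
  have main: "\<bar>a+b\<bar> powr p \<le> (1 + 1/(2*\<kappa>)) * \<bar>a\<bar> powr p
      + p * sgn a * \<bar>a\<bar> powr (p-1) * b + E * \<kappa> powr (p / min p 2 - 1) * \<bar>b\<bar> powr p"
    if k: "\<kappa> \<ge> 1" for \<kappa> a b :: real
  proof (cases "\<bar>a\<bar> \<le> 2 * \<bar>b\<bar>")
    case True
    then show ?thesis by (rule scal_case1[OF p _ k q1 Ea])
  next
    case False
    then have ab: "2 * \<bar>b\<bar> < \<bar>a\<bar>" by simp
    show ?thesis
    proof (cases "a > 0")
      case True
      have "\<bar>a+b\<bar> powr p \<le> (1 + 1/(2*\<kappa>)) * a powr p + p * a powr (p-1) * b
            + E * \<kappa> powr (p / min p 2 - 1) * \<bar>b\<bar> powr p"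
        by (rule scal_case2_pos[OF p True _ k G_def Eb]) (use ab True in simp)
      then show ?thesis using True by simp
    next
      case False
      then have an: "-a > 0" using ab by simp
      have "\<bar>(-a)+(-b)\<bar> powr p \<le> (1 + 1/(2*\<kappa>)) * (-a) powr p + p * (-a) powr (p-1) * (-b)
            + E * \<kappa> powr (p / min p 2 - 1) * \<bar>-b\<bar> powr p"
        by (rule scal_case2_pos[OF p an _ k G_def Eb]) (use ab an in simp)
      moreover have "\<bar>(-a)+(-b)\<bar> = \<bar>a+b\<bar>" by simp
      moreover have "\<bar>a\<bar> = -a" "sgn a = -1" using an by auto
      ultimately show ?thesis by simp
    qed
  qed
  show ?thesis using Epos main by blast
qed


lemma powr_convex0:
  fixes p t x y :: real
  assumes p: "p \<ge> 1" and t: "0 \<le> t" "t \<le> 1" and x: "x \<ge> 0" and y: "y \<ge> 0"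
  shows "(t*x + (1-t)*y) powr p \<le> t * x powr p + (1-t) * y powr p"
proof -
  have sub: "s powr p \<le> s" if "0 \<le> s" "s \<le> 1" for s :: real
    using powr_mono'[of 1 p s] that p by simp
  show ?thesis
  proof (cases "x = 0")
    case True
    then have "(t*x + (1-t)*y) powr p = (1-t) powr p * y powr p" using t y by (simp add: powr_mult)
    also have "\<dots> \<le> (1-t) * y powr p" using sub[of "1-t"] t by (intro mult_right_mono) auto
    finally show ?thesis using True p by simp
  next
    case xF: False
    show ?thesis
    proof (cases "y = 0")
      case True
      then have "(t*x + (1-t)*y) powr p = t powr p * x powr p" using t x by (simp add: powr_mult)
      also have "\<dots> \<le> t * x powr p" using sub[of "t"] t by (intro mult_right_mono) auto
      finally show ?thesis using True p by simp
    next
      case False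
      have "convex_on {0<..} (\<lambda>x::real. x powr p)" by (rule powr_convex[OF p])
      from convex_onD[OF this, of "1-t" x y] have
        "((1 - (1-t)) *\<^sub>R x + (1-t) *\<^sub>R y) powr p \<le> (1 - (1-t)) * x powr p + (1-t) * y powr p"
        using t x y xF False by auto
      then show ?thesis by (simp add: algebra_simps)
    qed
  qed
qed

lemma abs_powr_convex:
  fixes p t xx yy :: real
  assumes p: "p \<ge> 1" and t: "0 \<le> t" "t \<le> 1"
  shows "(\<bar>t*xx + (1-t)*yy\<bar>) powr p \<le> t * (\<bar>xx\<bar> powr p) + (1-t) * (\<bar>yy\<bar> powr p)"
proof -
  have "(\<bar>t*xx + (1-t)*yy\<bar>) \<le> t*(\<bar>xx\<bar>) + (1-t)*(\<bar>yy\<bar>)"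
  proof -
    have "\<bar>t*xx + (1-t)*yy\<bar> \<le> \<bar>t*xx\<bar> + \<bar>(1-t)*yy\<bar>" by (rule abs_triangle_ineq)
    also have "\<dots> = t*\<bar>xx\<bar> + (1-t)*\<bar>yy\<bar>" using t by (simp add: abs_mult)
    finally show ?thesis .
  qed
  then have "(\<bar>t*xx + (1-t)*yy\<bar>) powr p \<le> (t*(\<bar>xx\<bar>) + (1-t)*(\<bar>yy\<bar>)) powr p"
    using p by (intro powr_mono2) auto
  also have "\<dots> \<le> t * (\<bar>xx\<bar> powr p) + (1-t) * (\<bar>yy\<bar> powr p)"
    by (rule powr_convex0[OF p t]) auto
  finally show ?thesis .
qed

context
  fixes M :: "'a measure" and p :: real
  assumes p1: "1 \<le> p"
begin

definition "Ip f = (\<integral>x. \<bar>f x\<bar> powr p \<partial>M)"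

lemma LpI: "f \<in> borel_measurable M \<Longrightarrow> integrable M (\<lambda>x. \<bar>f x\<bar> powr p) \<Longrightarrow> f \<in> Lp M p"
  by (simp add: Lp_def)

lemma LpD: "f \<in> Lp M p \<Longrightarrow> f \<in> borel_measurable M" "f \<in> Lp M p \<Longrightarrow> integrable M (\<lambda>x. \<bar>f x\<bar> powr p)"
  by (auto simp: Lp_def)

lemma Ip_nonneg: "Ip f \<ge> 0"
  unfolding Ip_def by simp

lemma Lpnorm_Ip: "Lpnorm M p f = Ip f powr (1/p)"
  by (simp add: Lpnorm_def Ip_def)

lemma Lpnorm_nonneg: "Lpnorm M p f \<ge> 0"
  by (simp add: Lpnorm_def)

lemma Lpnorm_pow: "Lpnorm M p f powr p = Ip f"
  using p1 Ip_nonneg[of f] by (simp add: Lpnorm_Ip powr_powr)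

lemma Lpnorm_le_iff: "c \<ge> 0 \<Longrightarrow> Lpnorm M p f \<le> c \<longleftrightarrow> Ip f \<le> c powr p"
proof
  assume c: "c \<ge> 0" and h: "Lpnorm M p f \<le> c"
  have "Ip f = Lpnorm M p f powr p" by (simp add: Lpnorm_pow)
  also have "\<dots> \<le> c powr p" using h p1 by (intro powr_mono2) (auto simp: Lpnorm_nonneg)
  finally show "Ip f \<le> c powr p" .
next
  assume c: "c \<ge> 0" and h: "Ip f \<le> c powr p"
  have "Lpnorm M p f = Ip f powr (1/p)" by (rule Lpnorm_Ip)
  also have "\<dots> \<le> (c powr p) powr (1/p)" using h p1 by (intro powr_mono2) (auto simp: Ip_nonneg)
  also have "\<dots> = c" using p1 c by (simp add: powr_powr)
  finally show "Lpnorm M p f \<le> c" .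
qed

lemma Lp_zero: "(\<lambda>x. 0) \<in> Lp M p"
  using p1 by (intro LpI) auto

lemma Lp_cmult: "f \<in> Lp M p \<Longrightarrow> (\<lambda>x. c * f x) \<in> Lp M p"
proof (intro LpI)
  assume f: "f \<in> Lp M p"
  show "(\<lambda>x. c * f x) \<in> borel_measurable M" using LpD(1)[OF f] by measurable
  have "integrable M (\<lambda>x. \<bar>c\<bar> powr p * \<bar>f x\<bar> powr p)" using LpD(2)[OF f] by simp
  then show "integrable M (\<lambda>x. \<bar>c * f x\<bar> powr p)" by (simp add: abs_mult powr_mult)
qed

lemma Ip_cmult: "Ip (\<lambda>x. c * f x) = \<bar>c\<bar> powr p * Ip f"
  unfolding Ip_def by (simp add: abs_mult powr_mult)

lemma Lpnorm_cmult: "Lpnorm M p (\<lambda>x. c * f x) = \<bar>c\<bar> * Lpnorm M p f"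
  using p1 by (simp add: Lpnorm_Ip Ip_cmult powr_mult powr_powr)

lemma Lp_add:
  assumes f: "f \<in> Lp M p" and g: "g \<in> Lp M p"
  shows "(\<lambda>x. f x + g x) \<in> Lp M p"
proof (intro LpI)
  show meas: "(\<lambda>x. f x + g x) \<in> borel_measurable M" using LpD(1)[OF f] LpD(1)[OF g] by measurable
  have int: "integrable M (\<lambda>x. 2 powr p * (\<bar>f x\<bar> powr p + \<bar>g x\<bar> powr p))"
    using LpD(2)[OF f] LpD(2)[OF g] by auto
  moreover have bnd: "\<bar>f x + g x\<bar> powr p \<le> 2 powr p * (\<bar>f x\<bar> powr p + \<bar>g x\<bar> powr p)" for x
  proof -
    have "\<bar>f x + g x\<bar> \<le> 2 * max \<bar>f x\<bar> \<bar>g x\<bar>" by auto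
    then have "\<bar>f x + g x\<bar> powr p \<le> (2 * max \<bar>f x\<bar> \<bar>g x\<bar>) powr p"
      using p1 by (intro powr_mono2) auto
    also have "\<dots> = 2 powr p * max \<bar>f x\<bar> \<bar>g x\<bar> powr p" by (simp add: powr_mult)
    also have "max \<bar>f x\<bar> \<bar>g x\<bar> powr p \<le> \<bar>f x\<bar> powr p + \<bar>g x\<bar> powr p"
      by (auto simp: max_def)
    finally show ?thesis by simp
  qed
  show "integrable M (\<lambda>x. \<bar>f x + g x\<bar> powr p)"
  proof (rule Bochner_Integration.integrable_bound[OF int])
    show "(\<lambda>x. \<bar>f x + g x\<bar> powr p) \<in> borel_measurable M" using meas by measurable
    show "AE x in M. norm (\<bar>f x + g x\<bar> powr p) \<le> norm (2 powr p * (\<bar>f x\<bar> powr p + \<bar>g x\<bar> powr p))"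
    proof (intro AE_I2)
      fix x
      have "0 \<le> 2 powr p * (\<bar>f x\<bar> powr p + \<bar>g x\<bar> powr p)" by simp
      then show "norm (\<bar>f x + g x\<bar> powr p) \<le> norm (2 powr p * (\<bar>f x\<bar> powr p + \<bar>g x\<bar> powr p))"
        using bnd[of x] by simp
    qed
  qed
qed

lemma Lp_diff: "f \<in> Lp M p \<Longrightarrow> g \<in> Lp M p \<Longrightarrow> (\<lambda>x. f x - g x) \<in> Lp M p"
  using Lp_add[of f "\<lambda>x. (-1) * g x"] Lp_cmult[of g "-1"] by simp

lemma Lp_sum: "(\<And>i. i \<in> I \<Longrightarrow> f i \<in> Lp M p) \<Longrightarrow> (\<lambda>x. \<Sum>i\<in>I. f i x) \<in> Lp M p"
proof (induction I rule: infinite_finite_induct)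
  case (infinite A)
  then show ?case using Lp_zero by simp
next
  case empty
  then show ?case using Lp_zero by simp
next
  case (insert a A)
  then show ?case using Lp_add[of "f a" "\<lambda>x. \<Sum>i\<in>A. f i x"] by simp
qed

lemma Ip_integrable: "f \<in> Lp M p \<Longrightarrow> integrable M (\<lambda>x. \<bar>f x\<bar> powr p)"
  by (rule LpD(2))

lemma Minkowski:
  assumes f: "f \<in> Lp M p" and g: "g \<in> Lp M p"
  shows "Lpnorm M p (\<lambda>x. f x + g x) \<le> Lpnorm M p f + Lpnorm M p g"
proof -
  define A where "A = Lpnorm M p f"
  define B where "B = Lpnorm M p g"
  have A0: "A \<ge> 0" "B \<ge> 0" unfolding A_def B_def by (auto simp: Lpnorm_nonneg)
  have key: "Lpnorm M p (\<lambda>x. f x + g x) \<le> A + B + 2*e" if e: "e > 0" for e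
  proof -
    define \<alpha> where "\<alpha> = A + e"
    define \<beta> where "\<beta> = B + e"
    have ab: "\<alpha> > 0" "\<beta> > 0" using A0 e unfolding \<alpha>_def \<beta>_def by auto
    define t where "t = \<alpha> / (\<alpha> + \<beta>)"
    have t: "0 \<le> t" "t \<le> 1" "1 - t = \<beta> / (\<alpha>+\<beta>)" using ab unfolding t_def by (auto simp: field_simps)
    have pw: "\<bar>f x + g x\<bar> powr p \<le> (\<alpha>+\<beta>) powr p * (t * (\<bar>f x\<bar> powr p / \<alpha> powr p) + (1-t) * (\<bar>g x\<bar> powr p / \<beta> powr p))" for x
    proof -
      have e1: "t * (f x / \<alpha>) = f x / (\<alpha>+\<beta>)" unfolding t_def using ab by simp
      have e2: "(1-t) * (g x / \<beta>) = g x / (\<alpha>+\<beta>)" unfolding t(3) using ab by simp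
      have "(\<alpha>+\<beta>) * (t * (f x / \<alpha>) + (1-t) * (g x / \<beta>)) = f x + g x"
        unfolding e1 e2 using ab by (simp add: add_divide_distrib[symmetric])
      then have "f x + g x = (\<alpha>+\<beta>) * (t * (f x / \<alpha>) + (1-t) * (g x / \<beta>))" by simp
      then have "\<bar>f x + g x\<bar> powr p = (\<alpha>+\<beta>) powr p * \<bar>t * (f x / \<alpha>) + (1-t) * (g x / \<beta>)\<bar> powr p"
        using ab by (simp add: abs_mult powr_mult)
      also have "\<dots> \<le> (\<alpha>+\<beta>) powr p * (t * \<bar>f x / \<alpha>\<bar> powr p + (1-t) * \<bar>g x / \<beta>\<bar> powr p)"
        by (intro mult_left_mono abs_powr_convex p1 t) auto
      also have "\<bar>f x / \<alpha>\<bar> powr p = \<bar>f x\<bar> powr p / \<alpha> powr p" using ab by (simp add: powr_divide)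
      also have "\<bar>g x / \<beta>\<bar> powr p = \<bar>g x\<bar> powr p / \<beta> powr p" using ab by (simp add: powr_divide)
      finally show ?thesis .
    qed
    have int: "integrable M (\<lambda>x. (\<alpha>+\<beta>) powr p * (t * (\<bar>f x\<bar> powr p / \<alpha> powr p) + (1-t) * (\<bar>g x\<bar> powr p / \<beta> powr p)))"
      using Ip_integrable[OF f] Ip_integrable[OF g] by auto
    have "Ip (\<lambda>x. f x + g x) \<le> (\<integral>x. (\<alpha>+\<beta>) powr p * (t * (\<bar>f x\<bar> powr p / \<alpha> powr p) + (1-t) * (\<bar>g x\<bar> powr p / \<beta> powr p)) \<partial>M)"
      unfolding Ip_def by (rule integral_mono[OF Ip_integrable[OF Lp_add[OF f g]] int pw])
    also have "\<dots> = (\<alpha>+\<beta>) powr p * (t * (Ip f / \<alpha> powr p) + (1-t) * (Ip g / \<beta> powr p))"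
      using Ip_integrable[OF f] Ip_integrable[OF g] unfolding Ip_def by simp
    also have "\<dots> \<le> (\<alpha>+\<beta>) powr p * (t * 1 + (1-t) * 1)"
    proof -
      have "Lpnorm M p f \<le> \<alpha>" unfolding \<alpha>_def A_def using e by simp
      then have "Ip f \<le> \<alpha> powr p" using Lpnorm_le_iff[of \<alpha> f] ab by simp
      then have 1: "Ip f / \<alpha> powr p \<le> 1" using ab by simp
      have "Lpnorm M p g \<le> \<beta>" unfolding \<beta>_def B_def using e by simp
      then have "Ip g \<le> \<beta> powr p" using Lpnorm_le_iff[of \<beta> g] ab by simp
      then have 2: "Ip g / \<beta> powr p \<le> 1" using ab by simp
      show ?thesis using 1 2 t by (intro mult_left_mono add_mono mult_left_mono) auto
    qed
    finally have "Ip (\<lambda>x. f x + g x) \<le> (\<alpha>+\<beta>) powr p" by simp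
    then have "Lpnorm M p (\<lambda>x. f x + g x) \<le> \<alpha> + \<beta>" using Lpnorm_le_iff ab by simp
    then show ?thesis unfolding \<alpha>_def \<beta>_def by simp
  qed
  show ?thesis unfolding A_def[symmetric] B_def[symmetric]
  proof (rule field_le_epsilon)
    fix e :: real assume "e > 0"
    then show "Lpnorm M p (\<lambda>x. f x + g x) \<le> A + B + e" using key[of "e/2"] by simp
  qed
qed

end


primrec Pk :: "(nat \<Rightarrow> real) \<Rightarrow> (nat \<Rightarrow> 'a \<Rightarrow> real) \<Rightarrow> nat \<Rightarrow> nat \<Rightarrow> (('a \<Rightarrow> real) \<Rightarrow> real) \<Rightarrow> real" where
  "Pk c Y n 0 \<Phi> = \<Phi> (\<lambda>x. 0)"
| "Pk c Y n (Suc k) \<Phi> = Pk c Y n k (\<lambda>S. \<Sum>j<n. c j * \<Phi> (\<lambda>x. S x + Y j x))"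

primrec Rk :: "(nat \<Rightarrow> 'a \<Rightarrow> real) \<Rightarrow> nat \<Rightarrow> nat \<Rightarrow> ('a \<Rightarrow> real) set" where
  "Rk Y n 0 = {\<lambda>x. 0}"
| "Rk Y n (Suc k) = {\<lambda>x. S x + Y j x | S j. S \<in> Rk Y n k \<and> j < n}"

lemma Pk_mono:
  assumes c: "\<And>j. j < n \<Longrightarrow> c j \<ge> 0"
  shows "(\<And>S. S \<in> Rk Y n k \<Longrightarrow> \<Phi> S \<le> \<Psi> S) \<Longrightarrow> Pk c Y n k \<Phi> \<le> Pk c Y n k \<Psi>"
proof (induction k arbitrary: \<Phi> \<Psi>)
  case 0
  then show ?case by simp
next
  case (Suc k)
  show ?case unfolding Pk.simps
  proof (rule Suc.IH)
    fix S assume S: "S \<in> Rk Y n k"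
    show "(\<Sum>j<n. c j * \<Phi> (\<lambda>x. S x + Y j x)) \<le> (\<Sum>j<n. c j * \<Psi> (\<lambda>x. S x + Y j x))"
    proof (intro sum_mono mult_left_mono)
      fix j assume j: "j \<in> {..<n}"
      then show "\<Phi> (\<lambda>x. S x + Y j x) \<le> \<Psi> (\<lambda>x. S x + Y j x)" using S by (intro Suc.prems) auto
      show "0 \<le> c j" using c j by auto
    qed
  qed
qed

lemma Pk_affine:
  assumes c1: "(\<Sum>j<n. c j) = 1"
  shows "Pk c Y n k (\<lambda>S. \<alpha> * \<Phi> S + \<beta>) = \<alpha> * Pk c Y n k \<Phi> + \<beta>"
proof (induction k arbitrary: \<Phi>)
  case 0
  then show ?case by simp
next
  case (Suc k)
  have "(\<lambda>S. \<Sum>j<n. c j * (\<alpha> * \<Phi> (\<lambda>x. S x + Y j x) + \<beta>)) = (\<lambda>S. \<alpha> * (\<Sum>j<n. c j * \<Phi> (\<lambda>x. S x + Y j x)) + \<beta>)"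
  proof
    fix S
    have "(\<Sum>j<n. c j * (\<alpha> * \<Phi> (\<lambda>x. S x + Y j x) + \<beta>)) = (\<Sum>j<n. \<alpha> * (c j * \<Phi> (\<lambda>x. S x + Y j x)) + c j * \<beta>)"
      by (simp add: algebra_simps)
    also have "\<dots> = \<alpha> * (\<Sum>j<n. c j * \<Phi> (\<lambda>x. S x + Y j x)) + (\<Sum>j<n. c j) * \<beta>"
      by (simp add: sum.distrib sum_distrib_left sum_distrib_right)
    finally show "(\<Sum>j<n. c j * (\<alpha> * \<Phi> (\<lambda>x. S x + Y j x) + \<beta>)) = \<alpha> * (\<Sum>j<n. c j * \<Phi> (\<lambda>x. S x + Y j x)) + \<beta>"
      using c1 by simp
  qed
  then show ?case using Suc.IH by simp
qed

lemma Pk_exists: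
  assumes c: "\<And>j. j < n \<Longrightarrow> c j \<ge> 0" and c1: "(\<Sum>j<n. c j) = 1"
  shows "Pk c Y n k \<Phi> \<le> B \<Longrightarrow> \<exists>S\<in>Rk Y n k. \<Phi> S \<le> B"
proof (induction k arbitrary: \<Phi>)
  case 0
  then show ?case by simp
next
  case (Suc k)
  from Suc.prems have "Pk c Y n k (\<lambda>S. \<Sum>j<n. c j * \<Phi> (\<lambda>x. S x + Y j x)) \<le> B" by simp
  from Suc.IH[OF this] obtain S where S: "S \<in> Rk Y n k" and le: "(\<Sum>j<n. c j * \<Phi> (\<lambda>x. S x + Y j x)) \<le> B"
    by blast
  have "\<exists>j<n. \<Phi> (\<lambda>x. S x + Y j x) \<le> B"
  proof (rule ccontr)
    assume "\<not> ?thesis"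
    then have gt: "\<And>j. j < n \<Longrightarrow> \<Phi> (\<lambda>x. S x + Y j x) > B" by auto
    obtain j0 where j0: "j0 < n" "c j0 > 0"
    proof (rule ccontr)
      assume "\<not> thesis"
      then have "\<And>j. j < n \<Longrightarrow> c j \<le> 0" using that by force
      then have "(\<Sum>j<n. c j) \<le> 0" by (intro sum_nonpos) auto
      then show False using c1 by simp
    qed
    have "(\<Sum>j<n. c j * B) < (\<Sum>j<n. c j * \<Phi> (\<lambda>x. S x + Y j x))"
    proof (rule sum_strict_mono_ex1)
      show "\<forall>j\<in>{..<n}. c j * B \<le> c j * \<Phi> (\<lambda>x. S x + Y j x)"
        using gt c by (meson lessThan_iff less_imp_le mult_left_mono)
      show "\<exists>j\<in>{..<n}. c j * B < c j * \<Phi> (\<lambda>x. S x + Y j x)"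
        using j0 gt by (intro bexI[of _ j0]) auto
    qed simp
    moreover have "(\<Sum>j<n. c j * B) = B" using c1 by (simp add: sum_distrib_right[symmetric])
    ultimately show False using le by simp
  qed
  then obtain j where "j < n" "\<Phi> (\<lambda>x. S x + Y j x) \<le> B" by blast
  moreover have "(\<lambda>x. S x + Y j x) \<in> Rk Y n (Suc k)" using S \<open>j < n\<close> by auto
  ultimately show ?case by blast
qed

lemma Rk_repr: "S \<in> Rk Y n k \<Longrightarrow> \<exists>J. (\<forall>t<k. J t < n) \<and> S = (\<lambda>x. \<Sum>t<k. Y (J t) x)"
proof (induction k arbitrary: S)
  case 0
  then show ?case by simp
next
  case (Suc k)
  then obtain S0 j where S: "S = (\<lambda>x. S0 x + Y j x)" "S0 \<in> Rk Y n k" "j < n" by auto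
  from Suc.IH[OF S(2)] obtain J where J: "\<forall>t<k. J t < n" "S0 = (\<lambda>x. \<Sum>t<k. Y (J t) x)" by blast
  define J' where "J' = J(k := j)"
  have "\<forall>t<Suc k. J' t < n" using J S unfolding J'_def by (auto simp: less_Suc_eq)
  moreover have "S = (\<lambda>x. \<Sum>t<Suc k. Y (J' t) x)"
    using J S unfolding J'_def by (auto intro!: sum.cong)
  ultimately show ?case by blast
qed


context
  fixes M :: "'a measure" and p :: real
  assumes p: "1 < p"
begin

lemma p1: "1 \<le> p" using p by simp

lemma Rk_Lp: "(\<And>j. j < n \<Longrightarrow> Y j \<in> Lp M p) \<Longrightarrow> S \<in> Rk Y n k \<Longrightarrow> S \<in> Lp M p"
  using Rk_repr[of S Y n k] Lp_sum[OF p1, of "{..<k}"] by fastforce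

lemma step_bound:
  fixes E \<kappa> \<Lambda> :: real
  assumes c: "\<And>j. j < n \<Longrightarrow> c j \<ge> 0" and c1: "(\<Sum>j<n. c j) = 1"
    and Y: "\<And>j. j < n \<Longrightarrow> Y j \<in> Lp M p"
    and Y0: "\<And>x. x \<in> space M \<Longrightarrow> (\<Sum>j<n. c j * Y j x) = 0"
    and YL: "\<And>j. j < n \<Longrightarrow> Ip M p (Y j) \<le> \<Lambda>"
    and S: "S \<in> Lp M p" and k: "\<kappa> \<ge> 1"
    and E: "\<forall>\<kappa> a b. \<kappa> \<ge> 1 \<longrightarrow> \<bar>a+b\<bar> powr p \<le> (1 + 1/(2*\<kappa>)) * \<bar>a\<bar> powr p
      + p * sgn a * \<bar>a\<bar> powr (p-1) * b + E * \<kappa> powr (p / min p 2 - 1) * \<bar>b\<bar> powr p"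
    and E0: "E \<ge> 0"
  shows "(\<Sum>j<n. c j * Ip M p (\<lambda>x. S x + Y j x)) \<le> (1 + 1/(2*\<kappa>)) * Ip M p S + E * \<kappa> powr (p / min p 2 - 1) * \<Lambda>"
proof -
  define a where "a = 1 + 1/(2*\<kappa>)"
  define e where "e = E * \<kappa> powr (p / min p 2 - 1)"
  have e0: "e \<ge> 0" unfolding e_def using E0 by simp
  have intSY: "integrable M (\<lambda>x. \<bar>S x + Y j x\<bar> powr p)" if "j < n" for j
    using LpD(2)[OF p1 Lp_add[OF p1 S Y[OF that]]] .
  have intY: "integrable M (\<lambda>x. \<bar>Y j x\<bar> powr p)" if "j < n" for j
    using LpD(2)[OF p1 Y[OF that]] .
  have intS: "integrable M (\<lambda>x. \<bar>S x\<bar> powr p)" using LpD(2)[OF p1 S] .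
  have intSum: "integrable M (\<lambda>x. \<Sum>j<n. c j * \<bar>Y j x\<bar> powr p)"
    by (intro Bochner_Integration.integrable_sum) (auto intro: intY)
  have "(\<Sum>j<n. c j * Ip M p (\<lambda>x. S x + Y j x)) = (\<integral>x. (\<Sum>j<n. c j * \<bar>S x + Y j x\<bar> powr p) \<partial>M)"
    unfolding Ip_def[OF p1] using intSY by (simp add: integral_sum)
  also have "\<dots> \<le> (\<integral>x. a * \<bar>S x\<bar> powr p + e * (\<Sum>j<n. c j * \<bar>Y j x\<bar> powr p) \<partial>M)"
  proof (rule integral_mono)
    show "integrable M (\<lambda>x. \<Sum>j<n. c j * \<bar>S x + Y j x\<bar> powr p)" using intSY by auto
    show "integrable M (\<lambda>x. a * \<bar>S x\<bar> powr p + e * (\<Sum>j<n. c j * \<bar>Y j x\<bar> powr p))"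
      using intSum intS by auto
    fix x assume x: "x \<in> space M"
    have "(\<Sum>j<n. c j * \<bar>S x + Y j x\<bar> powr p) \<le>
        (\<Sum>j<n. c j * (a * \<bar>S x\<bar> powr p + p * sgn (S x) * \<bar>S x\<bar> powr (p-1) * Y j x + e * \<bar>Y j x\<bar> powr p))"
      using E k c unfolding a_def e_def by (intro sum_mono mult_left_mono) (auto simp: mult.assoc)
    also have "\<dots> = (\<Sum>j<n. c j) * (a * \<bar>S x\<bar> powr p) + (p * sgn (S x) * \<bar>S x\<bar> powr (p-1)) * (\<Sum>j<n. c j * Y j x)
        + e * (\<Sum>j<n. c j * \<bar>Y j x\<bar> powr p)"
      by (simp add: algebra_simps sum.distrib sum_distrib_left sum_distrib_right)
    also have "\<dots> = a * \<bar>S x\<bar> powr p + e * (\<Sum>j<n. c j * \<bar>Y j x\<bar> powr p)"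
      using c1 Y0[OF x] by simp
    finally show "(\<Sum>j<n. c j * \<bar>S x + Y j x\<bar> powr p) \<le> a * \<bar>S x\<bar> powr p + e * (\<Sum>j<n. c j * \<bar>Y j x\<bar> powr p)" .
  qed
  also have "\<dots> = a * Ip M p S + e * (\<Sum>j<n. c j * Ip M p (Y j))"
  proof -
    have "(\<integral>x. a * \<bar>S x\<bar> powr p + e * (\<Sum>j<n. c j * \<bar>Y j x\<bar> powr p) \<partial>M)
       = (\<integral>x. a * \<bar>S x\<bar> powr p \<partial>M) + (\<integral>x. e * (\<Sum>j<n. c j * \<bar>Y j x\<bar> powr p) \<partial>M)"
      by (rule Bochner_Integration.integral_add) (use intS intSum in auto)
    also have "\<dots> = a * (\<integral>x. \<bar>S x\<bar> powr p \<partial>M) + e * (\<integral>x. (\<Sum>j<n. c j * \<bar>Y j x\<bar> powr p) \<partial>M)"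
      by simp
    also have "(\<integral>x. (\<Sum>j<n. c j * \<bar>Y j x\<bar> powr p) \<partial>M) = (\<Sum>j<n. c j * (\<integral>x. \<bar>Y j x\<bar> powr p \<partial>M))"
      by (subst Bochner_Integration.integral_sum) (auto intro: intY)
    finally show ?thesis unfolding Ip_def[OF p1] .
  qed
  also have "\<dots> \<le> a * Ip M p S + e * \<Lambda>"
  proof -
    have "(\<Sum>j<n. c j * Ip M p (Y j)) \<le> (\<Sum>j<n. c j * \<Lambda>)"
      using c YL by (intro sum_mono mult_left_mono) auto
    also have "\<dots> = \<Lambda>" using c1 by (simp add: sum_distrib_right[symmetric])
    finally show ?thesis using e0 by (intro add_left_mono mult_left_mono) auto
  qed
  finally show ?thesis unfolding a_def e_def by (simp add: mult.assoc)
qed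

end

lemma arith_step:
  fixes q E \<Lambda> :: real and k :: nat
  assumes q: "q \<ge> 1" and E: "E \<ge> 0" and L: "\<Lambda> \<ge> 0"
  shows "(1 + 1/(2*max 1 (real k))) * (2*E * real k powr q * \<Lambda>) + E * max 1 (real k) powr (q-1) * \<Lambda>
      \<le> 2*E * real (Suc k) powr q * \<Lambda>"
proof -
  have key: "(1 + 1/(2*max 1 (real k))) * (2 * real k powr q) + max 1 (real k) powr (q-1) \<le> 2 * real (Suc k) powr q"
  proof (cases "k = 0")
    case True
    then show ?thesis using q by simp
  next
    case False
    then have k1: "real k \<ge> 1" by simp
    then have mx: "max 1 (real k) = real k" by simp
    have kd: "real k powr q / real k = real k powr (q-1)" using k1 by (simp add: powr_diff)
    have "(1 + 1/(2*real k)) * (2 * real k powr q) + real k powr (q-1) = 2 * (real k powr q + real k powr (q-1))"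
      using k1 kd by (simp add: field_simps)
    also have "real k powr q + real k powr (q-1) = real k powr q * (1 + 1/real k)"
      using kd k1 by (simp add: field_simps)
    also have "\<dots> \<le> real k powr q * (1 + 1/real k) powr q"
    proof -
      have "(1 + 1/real k) powr 1 \<le> (1 + 1/real k) powr q" using q k1 by (intro powr_mono) auto
      then show ?thesis using k1 by (intro mult_left_mono) auto
    qed
    also have "\<dots> = (real k * (1 + 1/real k)) powr q" using k1 by (simp add: powr_mult)
    also have "real k * (1 + 1/real k) = real (Suc k)" using k1 by (simp add: field_simps)
    finally show ?thesis unfolding mx by simp
  qed
  have "(1 + 1/(2*max 1 (real k))) * (2*E * real k powr q * \<Lambda>) + E * max 1 (real k) powr (q-1) * \<Lambda>
      = (E * \<Lambda>) * ((1 + 1/(2*max 1 (real k))) * (2 * real k powr q) + max 1 (real k) powr (q-1))"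
    by (simp add: algebra_simps)
  also have "\<dots> \<le> (E * \<Lambda>) * (2 * real (Suc k) powr q)"
    using key E L by (intro mult_left_mono) auto
  also have "\<dots> = 2*E * real (Suc k) powr q * \<Lambda>" by simp
  finally show ?thesis .
qed

context
  fixes M :: "'a measure" and p :: real
  assumes p: "1 < p"
begin

lemma sample_bound:
  fixes E \<Lambda> :: real and n :: nat and c :: "nat \<Rightarrow> real" and Y :: "nat \<Rightarrow> 'a \<Rightarrow> real"
  assumes c: "\<And>j. j < n \<Longrightarrow> c j \<ge> 0" and c1: "(\<Sum>j<n. c j) = 1"
    and Y: "\<And>j. j < n \<Longrightarrow> Y j \<in> Lp M p"
    and Y0: "\<And>x. x \<in> space M \<Longrightarrow> (\<Sum>j<n. c j * Y j x) = 0"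
    and YL: "\<And>j. j < n \<Longrightarrow> Ip M p (Y j) \<le> \<Lambda>" and L0: "\<Lambda> \<ge> 0"
    and E: "\<forall>\<kappa> a b. \<kappa> \<ge> 1 \<longrightarrow> \<bar>a+b\<bar> powr p \<le> (1 + 1/(2*\<kappa>)) * \<bar>a\<bar> powr p
      + p * sgn a * \<bar>a\<bar> powr (p-1) * b + E * \<kappa> powr (p / min p 2 - 1) * \<bar>b\<bar> powr p"
    and E0: "E \<ge> 0"
  shows "Pk c Y n k (Ip M p) \<le> 2*E * real k powr (p / min p 2) * \<Lambda>"
proof (induction k)
  case 0
  then show ?case using p1[OF p] by (simp add: Ip_def[OF p1[OF p]])
next
  case (Suc k)
  define \<kappa> where "\<kappa> = max 1 (real k)"
  define q where "q = p / min p 2"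
  have q1: "q \<ge> 1" unfolding q_def using p by (auto simp: min_def)
  have "Pk c Y n (Suc k) (Ip M p) = Pk c Y n k (\<lambda>S. \<Sum>j<n. c j * Ip M p (\<lambda>x. S x + Y j x))" by simp
  also have "\<dots> \<le> Pk c Y n k (\<lambda>S. (1 + 1/(2*\<kappa>)) * Ip M p S + E * \<kappa> powr (q - 1) * \<Lambda>)"
  proof (rule Pk_mono[OF c])
    fix S assume SR: "S \<in> Rk Y n k"
    have S: "S \<in> Lp M p" using Rk_Lp[OF p, where Y=Y and n=n and S=S and k=k] Y SR by blast
    show "(\<Sum>j<n. c j * Ip M p (\<lambda>x. S x + Y j x)) \<le> (1 + 1/(2*\<kappa>)) * Ip M p S + E * \<kappa> powr (q - 1) * \<Lambda>"
      unfolding q_def by (rule step_bound[OF p c c1 Y Y0 YL S _ E E0]) (auto simp: \<kappa>_def)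
  qed
  also have "\<dots> = (1 + 1/(2*\<kappa>)) * Pk c Y n k (Ip M p) + E * \<kappa> powr (q - 1) * \<Lambda>"
    by (rule Pk_affine[OF c1])
  also have "\<dots> \<le> (1 + 1/(2*\<kappa>)) * (2*E * real k powr q * \<Lambda>) + E * \<kappa> powr (q - 1) * \<Lambda>"
    using Suc.IH unfolding q_def \<kappa>_def by (intro add_right_mono mult_left_mono) auto
  also have "\<dots> \<le> 2*E * real (Suc k) powr q * \<Lambda>"
    unfolding \<kappa>_def by (rule arith_step[OF q1 E0 L0])
  finally show ?case unfolding q_def .
qed

lemma sample_exists:
  fixes E \<Lambda> :: real and n :: nat and c :: "nat \<Rightarrow> real" and Y :: "nat \<Rightarrow> 'a \<Rightarrow> real"
  assumes c: "\<And>j. j < n \<Longrightarrow> c j \<ge> 0" and c1: "(\<Sum>j<n. c j) = 1"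
    and Y: "\<And>j. j < n \<Longrightarrow> Y j \<in> Lp M p"
    and Y0: "\<And>x. x \<in> space M \<Longrightarrow> (\<Sum>j<n. c j * Y j x) = 0"
    and YL: "\<And>j. j < n \<Longrightarrow> Ip M p (Y j) \<le> \<Lambda>" and L0: "\<Lambda> \<ge> 0"
    and E: "\<forall>\<kappa> a b. \<kappa> \<ge> 1 \<longrightarrow> \<bar>a+b\<bar> powr p \<le> (1 + 1/(2*\<kappa>)) * \<bar>a\<bar> powr p
      + p * sgn a * \<bar>a\<bar> powr (p-1) * b + E * \<kappa> powr (p / min p 2 - 1) * \<bar>b\<bar> powr p"
    and E0: "E \<ge> 0"
  shows "\<exists>J. (\<forall>t<k. J t < n) \<and> Ip M p (\<lambda>x. \<Sum>t<k. Y (J t) x) \<le> 2*E * real k powr (p / min p 2) * \<Lambda>"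
proof -
  have B: "Pk c Y n k (Ip M p) \<le> 2*E * real k powr (p / min p 2) * \<Lambda>"
    by (rule sample_bound) (fact c c1 Y Y0 YL L0 E E0)+
  from Pk_exists[OF c c1 B]
  obtain S where "S \<in> Rk Y n k" "Ip M p S \<le> 2*E * real k powr (p / min p 2) * \<Lambda>" by blast
  with Rk_repr[of S Y n k] show ?thesis by blast
qed

end


lemma part_eval:
  fixes a :: "nat \<Rightarrow> real"
  assumes disj: "\<forall>i<l. \<forall>j<l. i \<noteq> j \<longrightarrow> A i \<inter> A j = {}" and i0: "i0 < l" and x: "x \<in> A i0"
  shows "(\<Sum>i<l. a i * indicator (A i) x) = a i0"
proof -
  have "(\<Sum>i<l. a i * indicator (A i) x) = (\<Sum>i<l. if i = i0 then a i else 0)"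
  proof (rule sum.cong)
    fix i assume "i \<in> {..<l}"
    then show "a i * indicator (A i) x = (if i = i0 then a i else 0)"
      using disj i0 x by (auto simp: indicator_def)
  qed simp
  also have "\<dots> = a i0" using i0 by simp
  finally show ?thesis .
qed

lemma part_out:
  fixes a :: "nat \<Rightarrow> real"
  assumes "x \<notin> (\<Union>i<l. A i)"
  shows "(\<Sum>i<l. a i * indicator (A i) x) = 0"
  using assms by (auto intro!: sum.neutral simp: indicator_def)

lemma Gpk_mono: "k \<le> k' \<Longrightarrow> h \<in> Gpk M p k \<Longrightarrow> h \<in> Gpk M p k'"
  unfolding Gpk_def by (auto intro: le_trans)

lemma Gpk_zero: "1 \<le> p \<Longrightarrow> (\<lambda>x. 0) \<in> Gpk M p 1"
  unfolding Gpk_def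
  by (intro CollectI conjI Lp_zero exI[of _ "1::nat"] exI[of _ "\<lambda>_. space M"] exI[of _ "\<lambda>_. 0::real"]) auto

lemma Gpk_comb:
  assumes p1: "1 \<le> p" and h1: "h1 \<in> Gpk M p k1" and h2: "h2 \<in> Gpk M p k2"
  shows "(\<lambda>x. \<alpha> * h1 x + \<beta> * h2 x) \<in> Gpk M p (k1 * k2)"
proof -
  obtain l1 A1 a1 where L1: "l1 \<le> k1" "\<forall>i<l1. A1 i \<in> sets M" "\<forall>i<l1. \<forall>j<l1. i \<noteq> j \<longrightarrow> A1 i \<inter> A1 j = {}"
    "(\<Union>i<l1. A1 i) = space M" "h1 = (\<lambda>x. \<Sum>i<l1. a1 i * indicator (A1 i) x)" and h1L: "h1 \<in> Lp M p"
    using h1 unfolding Gpk_def by blast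
  obtain l2 A2 a2 where L2: "l2 \<le> k2" "\<forall>i<l2. A2 i \<in> sets M" "\<forall>i<l2. \<forall>j<l2. i \<noteq> j \<longrightarrow> A2 i \<inter> A2 j = {}"
    "(\<Union>i<l2. A2 i) = space M" "h2 = (\<lambda>x. \<Sum>i<l2. a2 i * indicator (A2 i) x)" and h2L: "h2 \<in> Lp M p"
    using h2 unfolding Gpk_def by blast
  define l where "l = l1 * l2"
  define B where "B = (\<lambda>m. A1 (m div l2) \<inter> A2 (m mod l2))"
  define b where "b = (\<lambda>m. \<alpha> * a1 (m div l2) + \<beta> * a2 (m mod l2))"
  have l2pos: "l2 > 0" if "m < l" for m
    using that unfolding l_def by (cases "l2 = 0") auto
  have idx1: "m div l2 < l1" if "m < l" for m
    using that unfolding l_def by (simp add: less_mult_imp_div_less)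
  have idx2: "m mod l2 < l2" if "m < l" for m
    using l2pos[OF that] by simp
  note idx = idx1 idx2
  have lk: "l \<le> k1 * k2" unfolding l_def using L1(1) L2(1) by (rule mult_le_mono)
  have Bs: "\<forall>m<l. B m \<in> sets M" using idx L1(2) L2(2) unfolding B_def by auto
  have Bd: "\<forall>m<l. \<forall>m'<l. m \<noteq> m' \<longrightarrow> B m \<inter> B m' = {}"
  proof (intro allI impI)
    fix m m' assume m: "m < l" "m' < l" "m \<noteq> m'"
    show "B m \<inter> B m' = {}"
    proof (cases "m div l2 = m' div l2")
      case True
      then have "m mod l2 \<noteq> m' mod l2" using m by (metis div_mod_decomp)
      then show ?thesis using L2(3) idx m unfolding B_def by blast
    next
      case False
      then show ?thesis using L1(3) idx m unfolding B_def by blast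
    qed
  qed
  have sp1: "A1 i \<subseteq> space M" if "i < l1" for i using L1(4) that by blast
  have Bc: "(\<Union>m<l. B m) = space M"
  proof
    show "(\<Union>m<l. B m) \<subseteq> space M" unfolding B_def using idx sp1 by blast
    show "space M \<subseteq> (\<Union>m<l. B m)"
    proof
      fix x assume x: "x \<in> space M"
      then obtain i where i: "i < l1" "x \<in> A1 i" using L1(4) by auto
      obtain j where j: "j < l2" "x \<in> A2 j" using L2(4) x by auto
      define m where "m = i * l2 + j"
      have "i*l2 + j < i*l2 + l2" using j by simp
      also have "\<dots> = Suc i * l2" by simp
      also have "\<dots> \<le> l1 * l2" using i by (intro mult_le_mono1) simp
      finally have "m < l" unfolding m_def l_def .
      moreover have "m div l2 = i" "m mod l2 = j" unfolding m_def using j by auto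
      ultimately show "x \<in> (\<Union>m<l. B m)" unfolding B_def using i j by auto
    qed
  qed
  have feq: "(\<lambda>x. \<alpha> * h1 x + \<beta> * h2 x) = (\<lambda>x. \<Sum>m<l. b m * indicator (B m) x)"
  proof
    fix x
    show "\<alpha> * h1 x + \<beta> * h2 x = (\<Sum>m<l. b m * indicator (B m) x)"
    proof (cases "x \<in> space M")
      case False
      have "h1 x = 0" unfolding L1(5) by (rule part_out) (use False L1(4) in auto)
      moreover have "h2 x = 0" unfolding L2(5) by (rule part_out) (use False L2(4) in auto)
      moreover have "(\<Sum>m<l. b m * indicator (B m) x) = 0" by (rule part_out) (use False Bc in auto)
      ultimately show ?thesis by simp
    next
      case True
      then obtain m where m: "m < l" "x \<in> B m" using Bc by auto
      have "(\<Sum>m<l. b m * indicator (B m) x) = b m" by (rule part_eval[OF Bd m])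
      moreover have "h1 x = a1 (m div l2)" unfolding L1(5) using idx1[OF m(1)] idx2[OF m(1)] m(2) unfolding B_def
        by (intro part_eval[OF L1(3)]) auto
      moreover have "h2 x = a2 (m mod l2)" unfolding L2(5) using idx1[OF m(1)] idx2[OF m(1)] m(2) unfolding B_def
        by (intro part_eval[OF L2(3)]) auto
      ultimately show ?thesis unfolding b_def by simp
    qed
  qed
  have "(\<lambda>x. \<alpha> * h1 x + \<beta> * h2 x) \<in> Lp M p"
    by (intro Lp_add[OF p1] Lp_cmult[OF p1] h1L h2L)
  then show ?thesis unfolding Gpk_def using lk Bs Bd Bc feq by blast
qed

lemma Gpk_avg:
  assumes p1: "1 \<le> p" and N: "N \<ge> 1" and H: "\<And>t. t < s \<Longrightarrow> H t \<in> Gpk M p N"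
  shows "(\<lambda>x. \<Sum>t<s. w * H t x) \<in> Gpk M p (N ^ s)"
  using H
proof (induction s)
  case 0
  then show ?case using Gpk_zero[OF p1] by simp
next
  case (Suc s)
  have "(\<lambda>x. 1 * (\<Sum>t<s. w * H t x) + w * H s x) \<in> Gpk M p (N ^ s * N)"
    using Suc by (intro Gpk_comb[OF p1]) auto
  then show ?case by (simp add: mult.commute)
qed


lemma Lpnorm_sym: "Lpnorm M p (\<lambda>x. f x - g x) = Lpnorm M p (\<lambda>x. g x - f x)"
  unfolding Lpnorm_def by (simp add: abs_minus_commute)

context
  fixes M :: "'a measure" and p :: real
  assumes p: "1 < p"
begin

lemma Lpnorm_tri:
  assumes "f \<in> Lp M p" "g \<in> Lp M p" "h \<in> Lp M p"
  shows "Lpnorm M p (\<lambda>x. f x - h x) \<le> Lpnorm M p (\<lambda>x. f x - g x) + Lpnorm M p (\<lambda>x. g x - h x)"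
  using Minkowski[OF p1[OF p] Lp_diff[OF p1[OF p] assms(1,2)] Lp_diff[OF p1[OF p] assms(2,3)]] by simp

lemma Lpnorm_zero: "Lpnorm M p (\<lambda>x. 0) = 0"
  using p by (simp add: Lpnorm_def)

lemma Lpnorm_sum:
  assumes "finite I" "\<And>i. i \<in> I \<Longrightarrow> f i \<in> Lp M p"
  shows "Lpnorm M p (\<lambda>x. \<Sum>i\<in>I. f i x) \<le> (\<Sum>i\<in>I. Lpnorm M p (f i))"
  using assms
proof (induction I rule: finite_induct)
  case empty
  then show ?case using Lpnorm_zero by simp
next
  case (insert a I)
  have "Lpnorm M p (\<lambda>x. \<Sum>i\<in>insert a I. f i x) = Lpnorm M p (\<lambda>x. f a x + (\<Sum>i\<in>I. f i x))"
    using insert by simp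
  also have "\<dots> \<le> Lpnorm M p (f a) + Lpnorm M p (\<lambda>x. \<Sum>i\<in>I. f i x)"
    using Minkowski[OF p1[OF p], where f="f a" and g="\<lambda>x. \<Sum>i\<in>I. f i x" and M=M] insert.prems Lp_sum[OF p1[OF p], where I=I and f=f and M=M]
    by simp
  also have "\<dots> \<le> Lpnorm M p (f a) + (\<Sum>i\<in>I. Lpnorm M p (f i))"
    using insert by simp
  finally show ?case using insert by simp
qed

end

lemma Ncov_le:
  assumes "k \<ge> 1" "\<forall>f\<in>\<A>. \<exists>h\<in>Gpk M p k. Lpnorm M p (\<lambda>x. f x - h x) \<le> \<epsilon>"
  shows "Ncov M p \<epsilon> \<A> \<le> enat k"
  unfolding Ncov_def by (rule INF_lower) (use assms in auto)

lemma Ncov_fin: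
  assumes "Ncov M p \<epsilon> \<A> < \<infinity>"
  shows "\<exists>N. N \<ge> 1 \<and> Ncov M p \<epsilon> \<A> = enat N \<and> (\<forall>f\<in>\<A>. \<exists>h\<in>Gpk M p N. Lpnorm M p (\<lambda>x. f x - h x) \<le> \<epsilon>)"
proof -
  define S where "S = {k::nat. k \<ge> 1 \<and> (\<forall>f\<in>\<A>. \<exists>h\<in>Gpk M p k. Lpnorm M p (\<lambda>x. f x - h x) \<le> \<epsilon>)}"
  have eq: "Ncov M p \<epsilon> \<A> = (INF k\<in>S. enat k)" unfolding Ncov_def S_def by simp
  have "S \<noteq> {}"
  proof
    assume "S = {}"
    then have "Ncov M p \<epsilon> \<A> = \<infinity>" unfolding eq by (simp add: top_enat_def)
    then show False using assms by simp
  qed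
  then obtain k0 where "k0 \<in> S" by blast
  define N where "N = (LEAST k. k \<in> S)"
  have NS: "N \<in> S" unfolding N_def by (rule LeastI[of "\<lambda>k. k \<in> S" k0]) (rule \<open>k0 \<in> S\<close>)
  have "(INF k\<in>S. enat k) = enat N"
  proof (rule antisym)
    show "(INF k\<in>S. enat k) \<le> enat N" by (rule INF_lower[OF NS])
    show "enat N \<le> (INF k\<in>S. enat k)"
      by (rule INF_greatest) (simp add: N_def Least_le)
  qed
  then show ?thesis using NS unfolding eq S_def by auto
qed


lemma maurey:
  fixes M :: "'a measure" and p E L :: real and n k :: nat and c :: "nat \<Rightarrow> real" and g :: "nat \<Rightarrow> 'a \<Rightarrow> real"
  assumes p: "1 < p" and E0: "E \<ge> 0"
    and E: "\<forall>\<kappa> a b. \<kappa> \<ge> 1 \<longrightarrow> \<bar>a+b\<bar> powr p \<le> (1 + 1/(2*\<kappa>)) * \<bar>a\<bar> powr p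
      + p * sgn a * \<bar>a\<bar> powr (p-1) * b + E * \<kappa> powr (p / min p 2 - 1) * \<bar>b\<bar> powr p"
    and c: "\<And>j. j < n \<Longrightarrow> c j \<ge> 0" and c1: "(\<Sum>j<n. c j) = 1"
    and g: "\<And>j. j < n \<Longrightarrow> g j \<in> Lp M p" and L0: "L \<ge> 0"
    and gL: "\<And>i. i < n \<Longrightarrow> Lpnorm M p (\<lambda>x. g i x - (\<Sum>j<n. c j * g j x)) \<le> L"
    and k: "k \<ge> 1"
  shows "\<exists>J. (\<forall>t<k. J t < n) \<and> Lpnorm M p (\<lambda>x. (\<Sum>j<n. c j * g j x) - (\<Sum>t<k. (1/real k) * g (J t) x))
           \<le> (2*E) powr (1/p) * L * real k powr (1/min p 2 - 1)"
proof -
  note p1 = p1[OF p]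
  define f0 where "f0 = (\<lambda>x. \<Sum>j<n. c j * g j x)"
  have f0L: "f0 \<in> Lp M p" unfolding f0_def using g by (intro Lp_sum[OF p1] Lp_cmult[OF p1]) auto
  define Y where "Y = (\<lambda>i x. g i x - f0 x)"
  have Y: "Y j \<in> Lp M p" if "j < n" for j unfolding Y_def by (rule Lp_diff[OF p1 g[OF that] f0L])
  have Y0: "(\<Sum>j<n. c j * Y j x) = 0" for x
  proof -
    have "(\<Sum>j<n. c j * Y j x) = (\<Sum>j<n. c j * g j x) - (\<Sum>j<n. c j) * f0 x"
      unfolding Y_def by (simp add: right_diff_distrib sum_subtractf sum_distrib_right)
    then show ?thesis using c1 unfolding f0_def by simp
  qed
  have YL: "Ip M p (Y j) \<le> L powr p" if "j < n" for j
    using Lpnorm_le_iff[OF p1 L0, of M "Y j"] gL[OF that] unfolding Y_def f0_def by simp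
  obtain J where J: "\<forall>t<k. J t < n" and IS: "Ip M p (\<lambda>x. \<Sum>t<k. Y (J t) x) \<le> 2*E * real k powr (p / min p 2) * L powr p"
    using sample_exists[OF p c c1 Y Y0 YL _ E E0, of k] by auto
  define S where "S = (\<lambda>x. \<Sum>t<k. Y (J t) x)"
  have kpos: "real k > 0" using k by simp
  have feq: "(\<lambda>x. f0 x - (\<Sum>t<k. (1/real k) * g (J t) x)) = (\<lambda>x. (-1/real k) * S x)"
  proof
    fix x
    have "(-1/real k) * S x = (-1/real k) * ((\<Sum>t<k. g (J t) x) - real k * f0 x)"
      unfolding S_def Y_def by (simp add: sum_subtractf)
    also have "\<dots> = f0 x - (\<Sum>t<k. (1/real k) * g (J t) x)"
      using kpos by (simp add: field_simps sum_distrib_left[symmetric] sum_divide_distrib[symmetric])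
    finally show "f0 x - (\<Sum>t<k. (1/real k) * g (J t) x) = (-1/real k) * S x" by simp
  qed
  have "Lpnorm M p S = Ip M p S powr (1/p)" by (rule Lpnorm_Ip[OF p1])
  also have "\<dots> \<le> (2*E * real k powr (p / min p 2) * L powr p) powr (1/p)"
    using IS p Ip_nonneg[OF p1] unfolding S_def by (intro powr_mono2) auto
  also have "\<dots> = (2*E) powr (1/p) * real k powr (1/min p 2) * L"
  proof -
    have "(2*E * real k powr (p / min p 2) * L powr p) powr (1/p)
        = (2*E) powr (1/p) * (real k powr (p / min p 2)) powr (1/p) * (L powr p) powr (1/p)"
      using E0 by (simp add: powr_mult)
    also have "(real k powr (p / min p 2)) powr (1/p) = real k powr (1/min p 2)"
      using p by (simp add: powr_powr)
    also have "(L powr p) powr (1/p) = L" using p L0 by (simp add: powr_powr)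
    finally show ?thesis .
  qed
  finally have LS: "Lpnorm M p S \<le> (2*E) powr (1/p) * real k powr (1/min p 2) * L" .
  have "Lpnorm M p (\<lambda>x. f0 x - (\<Sum>t<k. (1/real k) * g (J t) x)) = (1/real k) * Lpnorm M p S"
    unfolding feq Lpnorm_cmult[OF p1] using kpos by simp
  also have "\<dots> \<le> (1/real k) * ((2*E) powr (1/p) * real k powr (1/min p 2) * L)"
    using LS kpos by (intro mult_left_mono) auto
  also have "\<dots> = (2*E) powr (1/p) * L * real k powr (1/min p 2 - 1)"
    using kpos by (simp add: powr_diff field_simps)
  finally show ?thesis using J unfolding f0_def by blast
qed


lemma key_s:
  fixes T K \<eta> \<epsilon> p :: real
  assumes T: "T > 0" and K: "K \<ge> 0" and \<eta>: "\<eta> > 0" and \<epsilon>: "\<epsilon> > 0" and p: "1 < p"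
  shows "T * K * real (nat \<lfloor>(2*T * K / (\<eta> * \<epsilon>)) powr (min p 2 / (min p 2 - 1))\<rfloor> + 1) powr (1 / min p 2 - 1)
         \<le> \<eta> * \<epsilon> / 2"
proof (cases "K = 0")
  case True
  then show ?thesis using \<eta> \<epsilon> by simp
next
  case False
  then have Kp: "K > 0" using K by simp
  define r where "r = min p 2"
  have r: "r > 1" unfolding r_def using p by simp
  define x where "x = 2*T * K / (\<eta> * \<epsilon>)"
  have x: "x > 0" unfolding x_def using T Kp \<eta> \<epsilon> by simp
  define \<gamma> where "\<gamma> = r / (r - 1)"
  have \<gamma>: "\<gamma> > 0" unfolding \<gamma>_def using r by simp
  define y where "y = x powr \<gamma>"
  have y: "y > 0" unfolding y_def using x by simp
  define s where "s = real (nat \<lfloor>y\<rfloor> + 1)"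
  have sy: "s > y" unfolding s_def using y by linarith
  have sp: "s > 0" using sy y by simp
  have "x = y powr (1/\<gamma>)" unfolding y_def using x \<gamma> by (simp add: powr_powr)
  also have "\<dots> < s powr (1/\<gamma>)" using sy y \<gamma> by (intro powr_less_mono2) auto
  finally have xs: "x < s powr (1/\<gamma>)" .
  have e: "1 / r - 1 = - (1/\<gamma>)" unfolding \<gamma>_def using r by (simp add: field_simps)
  have "s powr (1/r - 1) = 1 / s powr (1/\<gamma>)" unfolding e using sp by (simp add: powr_minus_divide)
  also have "\<dots> \<le> 1 / x" proof -
    have "0 < s powr (1/\<gamma>) * x" using xs x by (intro mult_pos_pos) auto
    then show ?thesis using xs x by (intro divide_left_mono) auto
  qed
  finally have "T * K * s powr (1/r - 1) \<le> T * K * (1/x)" using T K by (intro mult_left_mono) auto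
  also have "\<dots> = \<eta> * \<epsilon> / 2" unfolding x_def using T Kp \<eta> \<epsilon> by (simp add: field_simps)
  finally show ?thesis unfolding s_def y_def x_def \<gamma>_def r_def by simp
qed

lemma enat_pow: "enat N ^ s = enat (N ^ s)"
  by (induction s) (simp_all add: one_enat_def)


lemma part1:
  fixes M :: "'a measure" and p E K \<epsilon> \<eta> :: real and \<A> :: "('a \<Rightarrow> real) set"
  assumes p: "1 < p" and E0: "E > 0"
    and E: "\<forall>\<kappa> a b. \<kappa> \<ge> 1 \<longrightarrow> \<bar>a+b\<bar> powr p \<le> (1 + 1/(2*\<kappa>)) * \<bar>a\<bar> powr p
      + p * sgn a * \<bar>a\<bar> powr (p-1) * b + E * \<kappa> powr (p / min p 2 - 1) * \<bar>b\<bar> powr p"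
    and AL: "\<A> \<subseteq> Lp M p" and UA: "unif_approx M p \<A>" and K: "K \<ge> 0" and \<epsilon>: "\<epsilon> > 0"
    and \<eta>: "0 < \<eta>" "\<eta> < 1"
  shows "Ncov M p \<epsilon> {f \<in> closed_co M p \<A>. \<forall>g\<in>\<A>. Lpnorm M p (\<lambda>x. f x - g x) \<le> K}
     \<le> Ncov M p ((1 - \<eta>) * \<epsilon>) \<A> ^
         (nat \<lfloor>(2 * (2*E) powr (1/p) * K / (\<eta> * \<epsilon>)) powr (min p 2 / (min p 2 - 1))\<rfloor> + 1)"
proof -
  note p1 = p1[OF p]
  define T where "T = (2*E) powr (1/p)"
  have T: "T > 0" unfolding T_def using E0 by simp
  define s where "s = nat \<lfloor>(2 * T * K / (\<eta> * \<epsilon>)) powr (min p 2 / (min p 2 - 1))\<rfloor> + 1"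
  have s1: "s \<ge> 1" unfolding s_def by simp
  have "(1 - \<eta>) * \<epsilon> > 0" using \<eta> \<epsilon> by simp
  then have "Ncov M p ((1 - \<eta>) * \<epsilon>) \<A> < \<infinity>" using UA unfolding unif_approx_def by blast
  from Ncov_fin[OF this] obtain N where N1: "N \<ge> 1" and NE: "Ncov M p ((1 - \<eta>) * \<epsilon>) \<A> = enat N"
    and Napp: "\<forall>f\<in>\<A>. \<exists>h\<in>Gpk M p N. Lpnorm M p (\<lambda>x. f x - h x) \<le> (1 - \<eta>) * \<epsilon>" by blast
  have GL: "h \<in> Lp M p" if "h \<in> Gpk M p k" for h k using that unfolding Gpk_def by blast
  define \<delta> where "\<delta> = \<eta> * \<epsilon> / (2 * (1 + T))"
  have \<delta>: "\<delta> > 0" unfolding \<delta>_def using \<eta> \<epsilon> T by simp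
  have \<delta>T: "\<delta> + T * \<delta> = \<eta> * \<epsilon> / 2"
  proof -
    have "\<delta> + T * \<delta> = \<delta> * (1 + T)" by (simp add: algebra_simps)
    also have "\<dots> = \<eta> * \<epsilon> / 2" unfolding \<delta>_def
    proof -
      have "1 + T \<noteq> 0" using T by simp
      then show "\<eta> * \<epsilon> / (2 * (1 + T)) * (1 + T) = \<eta> * \<epsilon> / 2" by (simp add: field_simps)
    qed
    finally show ?thesis .
  qed
  have main: "\<exists>h\<in>Gpk M p (N ^ s). Lpnorm M p (\<lambda>x. f x - h x) \<le> \<epsilon>"
    if f: "f \<in> closed_co M p \<A>" and fK: "\<forall>g\<in>\<A>. Lpnorm M p (\<lambda>x. f x - g x) \<le> K" for f
  proof -
    have fL: "f \<in> Lp M p" using f unfolding closed_co_def by blast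
    have "\<forall>\<delta>>0. \<exists>g\<in>conv_comb \<A>. Lpnorm M p (\<lambda>x. f x - g x) \<le> \<delta>"
      using f unfolding closed_co_def by simp
    then obtain f0 where f0: "f0 \<in> conv_comb \<A>" and ff0: "Lpnorm M p (\<lambda>x. f x - f0 x) \<le> \<delta>"
      using \<delta> by blast
    have "\<exists>(n::nat) (c::nat\<Rightarrow>real) (g::nat \<Rightarrow> 'a \<Rightarrow> real). (\<forall>i<n. c i \<ge> 0 \<and> g i \<in> \<A>) \<and> (\<Sum>i<n. c i) = 1 \<and> f0 = (\<lambda>x. \<Sum>i<n. c i * g i x)"
      using f0 unfolding conv_comb_def by simp
    then obtain n :: nat and c :: "nat \<Rightarrow> real" and g :: "nat \<Rightarrow> 'a \<Rightarrow> real" where cg: "\<forall>i<n. c i \<ge> 0 \<and> g i \<in> \<A>" and c1: "(\<Sum>i<n. c i) = 1"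
      and f0e: "f0 = (\<lambda>x. \<Sum>i<n. c i * g i x)"
      by blast
    have gLp: "g i \<in> Lp M p" if "i < n" for i using cg that AL by blast
    have f0L: "f0 \<in> Lp M p" unfolding f0e using gLp by (intro Lp_sum[OF p1] Lp_cmult[OF p1]) auto
    have gL: "Lpnorm M p (\<lambda>x. g i x - (\<Sum>j<n. c j * g j x)) \<le> K + \<delta>" if i: "i < n" for i
    proof -
      have "Lpnorm M p (\<lambda>x. g i x - f0 x) \<le> Lpnorm M p (\<lambda>x. g i x - f x) + Lpnorm M p (\<lambda>x. f x - f0 x)"
        by (rule Lpnorm_tri[OF p gLp[OF i] fL f0L])
      also have "Lpnorm M p (\<lambda>x. g i x - f x) = Lpnorm M p (\<lambda>x. f x - g i x)" by (rule Lpnorm_sym)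
      also have "\<dots> \<le> K" using fK cg i by simp
      finally show ?thesis using ff0 unfolding f0e by simp
    qed
    obtain J where J: "\<forall>t<s. J t < n"
      and MJ: "Lpnorm M p (\<lambda>x. (\<Sum>j<n. c j * g j x) - (\<Sum>t<s. (1/real s) * g (J t) x))
           \<le> (2*E) powr (1/p) * (K + \<delta>) * real s powr (1/min p 2 - 1)"
    proof -
      have c0: "\<And>j. j < n \<Longrightarrow> c j \<ge> 0" using cg by simp
      have KL: "K + \<delta> \<ge> 0" using K \<delta> by simp
      show ?thesis using that maurey[OF p less_imp_le[OF E0] E c0 c1 gLp KL gL s1] by blast
    qed
    define avg where "avg = (\<lambda>x. \<Sum>t<s. (1/real s) * g (J t) x)"
    have avgL: "avg \<in> Lp M p" unfolding avg_def using J gLp by (intro Lp_sum[OF p1] Lp_cmult[OF p1]) auto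
    have "\<forall>t. \<exists>h. t < s \<longrightarrow> h \<in> Gpk M p N \<and> Lpnorm M p (\<lambda>x. g (J t) x - h x) \<le> (1 - \<eta>) * \<epsilon>"
      using Napp J cg by blast
    then obtain H where H: "\<And>t. t < s \<Longrightarrow> H t \<in> Gpk M p N"
      and HL: "\<And>t. t < s \<Longrightarrow> Lpnorm M p (\<lambda>x. g (J t) x - H t x) \<le> (1 - \<eta>) * \<epsilon>"
      by metis
    define h where "h = (\<lambda>x. \<Sum>t<s. (1/real s) * H t x)"
    have hG: "h \<in> Gpk M p (N ^ s)" unfolding h_def by (rule Gpk_avg[OF p1 N1 H])
    have hL: "h \<in> Lp M p" using GL[OF hG] .
    have sp: "real s > 0" using s1 by simp
    have "Lpnorm M p (\<lambda>x. avg x - h x) = Lpnorm M p (\<lambda>x. \<Sum>t<s. (1/real s) * (g (J t) x - H t x))"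
      unfolding avg_def h_def by (simp add: right_diff_distrib sum_subtractf)
    also have "\<dots> \<le> (\<Sum>t<s. Lpnorm M p (\<lambda>x. (1/real s) * (g (J t) x - H t x)))"
      using J gLp GL[OF H] by (intro Lpnorm_sum[OF p] Lp_cmult[OF p1] Lp_diff[OF p1]) auto
    also have "\<dots> = (\<Sum>t<s. (1/real s) * Lpnorm M p (\<lambda>x. g (J t) x - H t x))"
      by (intro sum.cong refl, subst Lpnorm_cmult[OF p1]) (use sp in simp)
    also have "\<dots> \<le> (\<Sum>t<s. (1/real s) * ((1 - \<eta>) * \<epsilon>))"
      using HL sp by (intro sum_mono mult_left_mono) auto
    also have "\<dots> = (1 - \<eta>) * \<epsilon>" using sp by simp
    finally have ah: "Lpnorm M p (\<lambda>x. avg x - h x) \<le> (1 - \<eta>) * \<epsilon>" .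
    have spow: "real s powr (1/min p 2 - 1) \<le> 1"
    proof -
      have "real s powr (1/min p 2 - 1) \<le> real s powr 0" using s1 p by (intro powr_mono) auto
      then show ?thesis using sp by simp
    qed
    have ks: "T * K * real s powr (1/min p 2 - 1) \<le> \<eta> * \<epsilon> / 2"
      unfolding s_def by (rule key_s[OF T K \<eta>(1) \<epsilon> p])
    have "T * (K + \<delta>) * real s powr (1/min p 2 - 1) = T * K * real s powr (1/min p 2 - 1) + T * \<delta> * real s powr (1/min p 2 - 1)"
      by (simp add: algebra_simps)
    also have "\<dots> \<le> \<eta> * \<epsilon> / 2 + T * \<delta>"
      using ks spow T \<delta> by (intro add_mono) (auto intro: mult_left_le)
    finally have mid: "T * (K + \<delta>) * real s powr (1/min p 2 - 1) \<le> \<eta> * \<epsilon> / 2 + T * \<delta>" .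
    have "Lpnorm M p (\<lambda>x. f x - h x) \<le> Lpnorm M p (\<lambda>x. f x - f0 x) + Lpnorm M p (\<lambda>x. f0 x - h x)"
      by (rule Lpnorm_tri[OF p fL f0L hL])
    also have "Lpnorm M p (\<lambda>x. f0 x - h x) \<le> Lpnorm M p (\<lambda>x. f0 x - avg x) + Lpnorm M p (\<lambda>x. avg x - h x)"
      by (rule Lpnorm_tri[OF p f0L avgL hL])
    finally have "Lpnorm M p (\<lambda>x. f x - h x) \<le> \<delta> + (T * (K + \<delta>) * real s powr (1/min p 2 - 1)) + (1 - \<eta>) * \<epsilon>"
      using ff0 MJ ah unfolding avg_def f0e T_def by linarith
    also have "\<dots> \<le> \<epsilon>"
    proof -
      have "(1 - \<eta>) * \<epsilon> = \<epsilon> - \<eta> * \<epsilon>" by (simp add: algebra_simps)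
      then show ?thesis using mid \<delta>T by linarith
    qed
    finally show ?thesis using hG by blast
  qed
  have "Ncov M p \<epsilon> {f \<in> closed_co M p \<A>. \<forall>g\<in>\<A>. Lpnorm M p (\<lambda>x. f x - g x) \<le> K} \<le> enat (N ^ s)"
    by (rule Ncov_le) (use N1 main in auto)
  then show ?thesis unfolding NE enat_pow s_def T_def .
qed


lemma closed_co_bound:
  fixes M :: "'a measure" and p B :: real and \<A> :: "('a \<Rightarrow> real) set"
  assumes p: "1 < p" and AL: "\<A> \<subseteq> Lp M p" and B: "\<forall>g\<in>\<A>. Lpnorm M p g \<le> B"
    and f: "f \<in> closed_co M p \<A>"
  shows "Lpnorm M p f \<le> B"
proof (rule field_le_epsilon)
  note p1 = p1[OF p]
  fix e :: real assume e: "e > 0"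
  have fL: "f \<in> Lp M p" using f unfolding closed_co_def by blast
  have "\<forall>\<delta>>0. \<exists>g\<in>conv_comb \<A>. Lpnorm M p (\<lambda>x. f x - g x) \<le> \<delta>"
    using f unfolding closed_co_def by simp
  then obtain f0 where f0: "f0 \<in> conv_comb \<A>" and ff0: "Lpnorm M p (\<lambda>x. f x - f0 x) \<le> e"
    using e by blast
  have "\<exists>(n::nat) (c::nat\<Rightarrow>real) (g::nat \<Rightarrow> 'a \<Rightarrow> real). (\<forall>i<n. c i \<ge> 0 \<and> g i \<in> \<A>) \<and> (\<Sum>i<n. c i) = 1 \<and> f0 = (\<lambda>x. \<Sum>i<n. c i * g i x)"
    using f0 unfolding conv_comb_def by simp
  then obtain n :: nat and c :: "nat \<Rightarrow> real" and g :: "nat \<Rightarrow> 'a \<Rightarrow> real" where cg: "\<forall>i<n. c i \<ge> 0 \<and> g i \<in> \<A>" and c1: "(\<Sum>i<n. c i) = 1"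
    and f0e: "f0 = (\<lambda>x. \<Sum>i<n. c i * g i x)"
    by blast
  have gLp: "g i \<in> Lp M p" if "i < n" for i using cg that AL by blast
  have f0L: "f0 \<in> Lp M p" unfolding f0e using gLp by (intro Lp_sum[OF p1] Lp_cmult[OF p1]) auto
  have "Lpnorm M p f0 \<le> (\<Sum>i<n. Lpnorm M p (\<lambda>x. c i * g i x))"
    unfolding f0e using gLp by (intro Lpnorm_sum[OF p] Lp_cmult[OF p1]) auto
  also have "\<dots> = (\<Sum>i<n. c i * Lpnorm M p (g i))"
    using cg by (intro sum.cong refl, subst Lpnorm_cmult[OF p1]) auto
  also have "\<dots> \<le> (\<Sum>i<n. c i * B)"
    using cg B by (intro sum_mono mult_left_mono) auto
  also have "\<dots> = B" using c1 by (simp add: sum_distrib_right[symmetric])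
  finally have f0B: "Lpnorm M p f0 \<le> B" .
  have "Lpnorm M p (\<lambda>x. (f x - f0 x) + f0 x) \<le> Lpnorm M p (\<lambda>x. f x - f0 x) + Lpnorm M p f0"
    by (rule Minkowski[OF p1 Lp_diff[OF p1 fL f0L] f0L])
  then have "Lpnorm M p f \<le> Lpnorm M p (\<lambda>x. f x - f0 x) + Lpnorm M p f0" by simp
  then show "Lpnorm M p f \<le> B + e" using ff0 f0B by linarith
qed

lemma diff_bound:
  fixes M :: "'a measure" and p :: real
  assumes p: "1 < p" and f: "f \<in> Lp M p" and g: "g \<in> Lp M p"
  shows "Lpnorm M p (\<lambda>x. f x - g x) \<le> Lpnorm M p f + Lpnorm M p g"
proof -
  note p1 = p1[OF p]
  have "Lpnorm M p (\<lambda>x. f x + (-1) * g x) \<le> Lpnorm M p f + Lpnorm M p (\<lambda>x. (-1) * g x)"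
    by (rule Minkowski[OF p1 f Lp_cmult[OF p1 g]])
  also have "Lpnorm M p (\<lambda>x. (-1) * g x) = Lpnorm M p g" by (subst Lpnorm_cmult[OF p1]) simp
  finally show ?thesis by simp
qed

theorem theorem4p22:
  fixes M :: "'a measure" and p :: real
  assumes nonzero: "emeasure M (space M) \<noteq> 0"
    and p: "1 < p"
  defines "r \<equiv> min p 2"
  shows "\<exists>C>0. (\<forall>\<A> K. \<A> \<subseteq> Lp M p \<longrightarrow> unif_approx M p \<A> \<longrightarrow> K \<ge> 0 \<longrightarrow>
            (let \<A>K = {f \<in> closed_co M p \<A>. \<forall>g\<in>\<A>. Lpnorm M p (\<lambda>x. f x - g x) \<le> K}
             in unif_approx M p \<A>K \<and>
                (\<forall>\<epsilon>>0. Ncov M p \<epsilon> \<A>K \<le>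
                   (INF \<eta> \<in> {0<..<1}. Ncov M p ((1 - \<eta>) * \<epsilon>) \<A> ^
                      (nat \<lfloor>(C * K / (\<eta> * \<epsilon>)) powr (r / (r - 1))\<rfloor> + 1)))))
         \<and> (\<forall>\<A>. \<A> \<subseteq> Lp M p \<longrightarrow> (\<exists>B. \<forall>f\<in>\<A>. Lpnorm M p f \<le> B) \<longrightarrow> unif_approx M p \<A>
             \<longrightarrow> unif_approx M p (closed_co M p \<A>))"
proof -
  obtain E where E0: "E > 0" and E: "\<forall>\<kappa> a b. \<kappa> \<ge> 1 \<longrightarrow> \<bar>a+b\<bar> powr p \<le> (1 + 1/(2*\<kappa>)) * \<bar>a\<bar> powr p
      + p * sgn a * \<bar>a\<bar> powr (p-1) * b + E * \<kappa> powr (p / min p 2 - 1) * \<bar>b\<bar> powr p"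
    using scalar_ineq[OF p] by blast
  define C where "C = 2 * (2*E) powr (1/p)"
  have C: "C > 0" unfolding C_def using E0 by simp
  have P1: "unif_approx M p {f \<in> closed_co M p \<A>. \<forall>g\<in>\<A>. Lpnorm M p (\<lambda>x. f x - g x) \<le> K} \<and>
      (\<forall>\<epsilon>>0. Ncov M p \<epsilon> {f \<in> closed_co M p \<A>. \<forall>g\<in>\<A>. Lpnorm M p (\<lambda>x. f x - g x) \<le> K} \<le>
         (INF \<eta> \<in> {0<..<1}. Ncov M p ((1 - \<eta>) * \<epsilon>) \<A> ^
            (nat \<lfloor>(C * K / (\<eta> * \<epsilon>)) powr (r / (r - 1))\<rfloor> + 1)))"
    if AL: "\<A> \<subseteq> Lp M p" and UA: "unif_approx M p \<A>" and K: "K \<ge> 0" for \<A> K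
  proof
    have bnd: "Ncov M p \<epsilon> {f \<in> closed_co M p \<A>. \<forall>g\<in>\<A>. Lpnorm M p (\<lambda>x. f x - g x) \<le> K}
       \<le> Ncov M p ((1 - \<eta>) * \<epsilon>) \<A> ^ (nat \<lfloor>(C * K / (\<eta> * \<epsilon>)) powr (r / (r - 1))\<rfloor> + 1)"
      if \<epsilon>: "\<epsilon> > 0" and \<eta>: "\<eta> \<in> {0<..<1}" for \<epsilon> \<eta>
      unfolding C_def r_def using part1[OF p E0 E AL UA K \<epsilon>] \<eta> by auto
    show "\<forall>\<epsilon>>0. Ncov M p \<epsilon> {f \<in> closed_co M p \<A>. \<forall>g\<in>\<A>. Lpnorm M p (\<lambda>x. f x - g x) \<le> K} \<le>
         (INF \<eta> \<in> {0<..<1}. Ncov M p ((1 - \<eta>) * \<epsilon>) \<A> ^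
            (nat \<lfloor>(C * K / (\<eta> * \<epsilon>)) powr (r / (r - 1))\<rfloor> + 1))"
      using bnd by (auto intro!: INF_greatest)
    show "unif_approx M p {f \<in> closed_co M p \<A>. \<forall>g\<in>\<A>. Lpnorm M p (\<lambda>x. f x - g x) \<le> K}"
      unfolding unif_approx_def
    proof (intro allI impI)
      fix \<epsilon> :: real assume \<epsilon>: "\<epsilon> > 0"
      have "(1 - 1/2) * \<epsilon> > 0" using \<epsilon> by simp
      then have "Ncov M p ((1 - 1/2) * \<epsilon>) \<A> < \<infinity>" using UA unfolding unif_approx_def by blast
      then obtain N where NE: "Ncov M p ((1 - 1/2) * \<epsilon>) \<A> = enat N" using Ncov_fin by blast
      have "Ncov M p \<epsilon> {f \<in> closed_co M p \<A>. \<forall>g\<in>\<A>. Lpnorm M p (\<lambda>x. f x - g x) \<le> K}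
         \<le> enat N ^ (nat \<lfloor>(C * K / ((1/2) * \<epsilon>)) powr (r / (r - 1))\<rfloor> + 1)"
        using bnd[OF \<epsilon>, of "1/2"] NE by simp
      also have "\<dots> < \<infinity>" by (simp add: enat_pow)
      finally show "Ncov M p \<epsilon> {f \<in> closed_co M p \<A>. \<forall>g\<in>\<A>. Lpnorm M p (\<lambda>x. f x - g x) \<le> K} < \<infinity>" .
    qed
  qed
  have P2: "unif_approx M p (closed_co M p \<A>)"
    if AL: "\<A> \<subseteq> Lp M p" and Bd: "\<exists>B. \<forall>f\<in>\<A>. Lpnorm M p f \<le> B" and UA: "unif_approx M p \<A>" for \<A>
  proof -
    obtain B where B: "\<forall>f\<in>\<A>. Lpnorm M p f \<le> B" using Bd by blast
    define B' where "B' = max B 0"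
    have B': "\<forall>f\<in>\<A>. Lpnorm M p f \<le> B'" "B' \<ge> 0" using B unfolding B'_def by auto
    have eq: "{f \<in> closed_co M p \<A>. \<forall>g\<in>\<A>. Lpnorm M p (\<lambda>x. f x - g x) \<le> 2 * B'} = closed_co M p \<A>"
    proof (intro set_eqI iffI)
      fix f assume "f \<in> closed_co M p \<A>"
      then have f: "f \<in> closed_co M p \<A>" .
      have fL: "f \<in> Lp M p" using f unfolding closed_co_def by blast
      have fB: "Lpnorm M p f \<le> B'" by (rule closed_co_bound[OF p AL B'(1) f])
      have "\<forall>g\<in>\<A>. Lpnorm M p (\<lambda>x. f x - g x) \<le> 2 * B'"
      proof
        fix g assume g: "g \<in> \<A>"
        have "Lpnorm M p (\<lambda>x. f x - g x) \<le> Lpnorm M p f + Lpnorm M p g"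
          using diff_bound[OF p fL] g AL by blast
        then show "Lpnorm M p (\<lambda>x. f x - g x) \<le> 2 * B'" using fB B'(1) g by fastforce
      qed
      then show "f \<in> {f \<in> closed_co M p \<A>. \<forall>g\<in>\<A>. Lpnorm M p (\<lambda>x. f x - g x) \<le> 2 * B'}" using f by blast
    qed auto
    show ?thesis using P1[OF AL UA, of "2 * B'"] B'(2) unfolding eq by simp
  qed
  show ?thesis
    by (rule exI[of _ C]) (use C P1 P2 in \<open>auto simp: Let_def\<close>)
qed


end
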